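(* Let $(\alpha_0,x_0)$ be a pointed transitive pre-action of $\Gamma=\mathrm{BS}(m,n)$ and let $\alpha$ be its maximal forest saturation. Then $\mathrm{Stab}_\alpha(x_0)=\mathrm{Stab}_{\alpha_0}(x_0)$. In particular the action $\alpha$ is isomorphic (as a pointed action) to $\mathrm{Stab}_{\alpha_0}(x_0)\backslash\Gamma\curvearrowleft\Gamma$ with basepoint the trivial coset.
   Context: $\mathrm{BS}(m,n)=\langle b,t\mid tb^mt^{-1}=b^n\rangle$, $|m|,|n|\ge2$; maps act on the right. A pre-action is $(X,\beta,\tau)$ with $\beta$ a bijection of $X$, $\tau$ a partial bijection, $\mathrm{dom}(\tau)$ $\beta^n$-invariant, $\mathrm{rng}(\tau)$ $\beta^m$-invariant, and $x\tau\beta^m=x\beta^n\tau$ on $\mathrm{dom}(\tau)$; saturated means $\mathrm{dom}(\tau)=\mathrm{rng}(\tau)=X$ (a genuine action). Schreier graph $\mathrm{Sch}(\alpha)$: vertices $X$, $b$-edges $x\to x\beta$ and $t$-edges $x\to x\tau$ ($x\in\mathrm{dom}\tau$), with opposite inverse-labelled edges; transitive means connected. For a path $c$, $\Psi(c)\in\Gamma$ is the element represented by its label; $\mathrm{Stab}_\alpha(x_0)=\Psi(\pi_1(\mathrm{Sch}(\alpha),x_0))$ (for a saturated pre-action this is the usual stabilizer). Bass–Serre graph $\mathrm{BS}(\alpha)$: vertices are $\beta$-orbits, positive edges are $\beta^n$-orbits in $\mathrm{dom}(\tau)$ (the edge $x\langle\beta^n\rangle$ goes from $x\langle\beta\rangle$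 to $x\tau\langle\beta\rangle$), negative edges are $\beta^m$-orbits in $\mathrm{rng}(\tau)$ (opposites); labels are cardinalities. A maximal forest saturation of $\alpha_0$ is a saturated pre-action $\alpha$ extending $\alpha_0$ such that in $\mathrm{BS}(\alpha)$: the subgraph induced on old vertices is $\mathrm{BS}(\alpha_0)$, the subgraph induced on new vertices is a forest, each forest component is attached to $\mathrm{BS}(\alpha_0)$ by a single pair of opposite edges, and each new vertex $v'$ with parent $v$ (neighbour closer to $\mathrm{BS}(\alpha_0)$) has label $L(v')=|m|L(v)/\gcd(L(v),n)$ if the edge from $v$ to $v'$ is positive and $L(v')=|n|L(v)/\gcd(L(v),m)$ if negative (with $\gcd(\infty,k)=|k|$, $\infty$ labels stay $\infty$). It is unique up to isomorphism fixing $\alpha_0$. *)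

theory Defs
  imports Main "HOL-Library.Extended_Nat"
begin

datatype gen = B | T

text \<open>A letter is a generator with a sign (True = the generator, False = its inverse).\<close>
type_synonym letter = "gen \<times> bool"
type_synonym word = "letter list"

definition bpow :: "int \<Rightarrow> word" where
  "bpow k = replicate (nat \<bar>k\<bar>) (B, k \<ge> 0)"

text \<open>The congruence on words generated by free cancellation and the relator
  t b^m t^{-1} = b^n; its classes are the elements of BS(m,n).\<close>
inductive bs_eq :: "int \<Rightarrow> int \<Rightarrow> word \<Rightarrow> word \<Rightarrow> bool" for m n where
  refl: "bs_eq m n w w"
| sym: "bs_eq m n u v \<Longrightarrow> bs_eq m n v u"
| trans: "bs_eq m n u v \<Longrightarrow> bs_eq m n v w \<Longrightarrow> bs_eq m n u w"
| cong: "bs_eq m n u v \<Longrightarrow> bs_eq m n (a @ u @ c) (a @ v @ c)"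
| cancel: "bs_eq m n [(g, s), (g, \<not> s)] []"
| relator: "bs_eq m n ([(T, True)] @ bpow m @ [(T, False)]) (bpow n)"

definition cls :: "int \<Rightarrow> int \<Rightarrow> word \<Rightarrow> word set" where
  "cls m n w = {u. bs_eq m n w u}"

text \<open>Right coset H g (g = cls w) of a subset H of the group.\<close>
definition coset :: "int \<Rightarrow> int \<Rightarrow> word set set \<Rightarrow> word \<Rightarrow> word set set" where
  "coset m n H w = {cls m n (u @ w) | u. cls m n u \<in> H}"

definition coset_space :: "int \<Rightarrow> int \<Rightarrow> word set set \<Rightarrow> word set set set" where
  "coset_space m n H = {coset m n H w | w. True}"

definition coset_act :: "int \<Rightarrow> int \<Rightarrow> word set set \<Rightarrow> letter \<Rightarrow> word set set" where
  "coset_act m n C s = {cls m n (u @ [s]) | u. cls m n u \<in> C}"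

record 'a preact =
  carrier :: "'a set"
  bmap :: "'a \<Rightarrow> 'a"
  tmap :: "'a \<rightharpoonup> 'a"

text \<open>Integer powers of beta (maps act on the right; x beta^k).\<close>
definition bp :: "'a preact \<Rightarrow> int \<Rightarrow> 'a \<Rightarrow> 'a" where
  "bp \<alpha> k x = (if k \<ge> 0 then (bmap \<alpha> ^^ nat k) x
                else (inv_into (carrier \<alpha>) (bmap \<alpha>) ^^ nat (- k)) x)"

definition pre_action :: "int \<Rightarrow> int \<Rightarrow> 'a preact \<Rightarrow> bool" where
  "pre_action m n \<alpha> \<longleftrightarrow>
     bij_betw (bmap \<alpha>) (carrier \<alpha>) (carrier \<alpha>)
   \<and> dom (tmap \<alpha>) \<subseteq> carrier \<alpha> \<and> ran (tmap \<alpha>) \<subseteq> carrier \<alpha>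
   \<and> inj_on (tmap \<alpha>) (dom (tmap \<alpha>))
   \<and> (\<forall>x \<in> carrier \<alpha>. x \<in> dom (tmap \<alpha>) \<longleftrightarrow> bp \<alpha> n x \<in> dom (tmap \<alpha>))
   \<and> (\<forall>x \<in> carrier \<alpha>. x \<in> ran (tmap \<alpha>) \<longleftrightarrow> bp \<alpha> m x \<in> ran (tmap \<alpha>))
   \<and> (\<forall>x \<in> dom (tmap \<alpha>). bp \<alpha> m (the (tmap \<alpha> x)) = the (tmap \<alpha> (bp \<alpha> n x)))"

definition saturated :: "'a preact \<Rightarrow> bool" where
  "saturated \<alpha> \<longleftrightarrow> dom (tmap \<alpha>) = carrier \<alpha> \<and> ran (tmap \<alpha>) = carrier \<alpha>"

definition extends :: "'a preact \<Rightarrow> 'a preact \<Rightarrow> bool" where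
  "extends \<alpha> \<alpha>0 \<longleftrightarrow> carrier \<alpha>0 \<subseteq> carrier \<alpha>
     \<and> (\<forall>x \<in> carrier \<alpha>0. bmap \<alpha> x = bmap \<alpha>0 x) \<and> tmap \<alpha>0 \<subseteq>\<^sub>m tmap \<alpha>"

text \<open>sch_path a x w y: there is a path in Sch(a) from x to y with label w
  (b-edges, t-edges, and their opposite inverse-labelled edges).\<close>
inductive sch_path :: "'a preact \<Rightarrow> 'a \<Rightarrow> word \<Rightarrow> 'a \<Rightarrow> bool" for \<alpha> where
  nil: "x \<in> carrier \<alpha> \<Longrightarrow> sch_path \<alpha> x [] x"
| b_fwd: "x \<in> carrier \<alpha> \<Longrightarrow> sch_path \<alpha> (bmap \<alpha> x) w y \<Longrightarrow> sch_path \<alpha> x ((B, True) # w) y"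
| b_bwd: "x \<in> carrier \<alpha> \<Longrightarrow> sch_path \<alpha> (inv_into (carrier \<alpha>) (bmap \<alpha>) x) w y
            \<Longrightarrow> sch_path \<alpha> x ((B, False) # w) y"
| t_fwd: "tmap \<alpha> x = Some z \<Longrightarrow> sch_path \<alpha> z w y \<Longrightarrow> sch_path \<alpha> x ((T, True) # w) y"
| t_bwd: "tmap \<alpha> z = Some x \<Longrightarrow> sch_path \<alpha> z w y \<Longrightarrow> sch_path \<alpha> x ((T, False) # w) y"

definition transitive :: "'a preact \<Rightarrow> bool" where
  "transitive \<alpha> \<longleftrightarrow> (\<forall>x \<in> carrier \<alpha>. \<forall>y \<in> carrier \<alpha>. \<exists>w. sch_path \<alpha> x w y)"

text \<open>Stab_a(x0) = Psi(pi_1(Sch(a), x0)) as a subset of BS(m,n).\<close>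
definition stab :: "int \<Rightarrow> int \<Rightarrow> 'a preact \<Rightarrow> 'a \<Rightarrow> word set set" where
  "stab m n \<alpha> x0 = cls m n ` {w. sch_path \<alpha> x0 w x0}"

definition orb :: "'a preact \<Rightarrow> int \<Rightarrow> 'a \<Rightarrow> 'a set" where
  "orb \<alpha> k x = {bp \<alpha> (k * j) x | j. True}"

definition bs_V :: "'a preact \<Rightarrow> 'a set set" where
  "bs_V \<alpha> = orb \<alpha> 1 ` carrier \<alpha>"

text \<open>Edges are tagged: (True, e) positive edges (beta^n-orbits in dom tau),
  (False, e) negative edges (beta^m-orbits in rng tau).\<close>
definition bs_E :: "int \<Rightarrow> int \<Rightarrow> 'a preact \<Rightarrow> (bool \<times> 'a set) set" where
  "bs_E m n \<alpha> = {(True, orb \<alpha> n x) | x. x \<in> dom (tmap \<alpha>)}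
              \<union> {(False, orb \<alpha> m y) | y. y \<in> ran (tmap \<alpha>)}"

definition bs_src :: "'a preact \<Rightarrow> bool \<times> 'a set \<Rightarrow> 'a set" where
  "bs_src \<alpha> e = (\<Union>x \<in> snd e. orb \<alpha> 1 x)"

definition bs_opp :: "'a preact \<Rightarrow> bool \<times> 'a set \<Rightarrow> bool \<times> 'a set" where
  "bs_opp \<alpha> e = (if fst e then (False, (\<lambda>x. the (tmap \<alpha> x)) ` snd e)
                  else (True, {x. \<exists>y \<in> snd e. tmap \<alpha> x = Some y}))"

definition bs_tgt :: "'a preact \<Rightarrow> bool \<times> 'a set \<Rightarrow> 'a set" where
  "bs_tgt \<alpha> e = bs_src \<alpha> (bs_opp \<alpha> e)"

definition lab :: "'a set \<Rightarrow> enat" where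
  "lab v = (if finite v then enat (card v) else \<infinity>)"

text \<open>Walks in the subgraph of BS(a) induced on the vertex set W.\<close>
inductive bs_walk :: "int \<Rightarrow> int \<Rightarrow> 'a preact \<Rightarrow> 'a set set \<Rightarrow> 'a set \<Rightarrow> (bool \<times> 'a set) list \<Rightarrow> 'a set \<Rightarrow> bool"
  for m n \<alpha> W where
  nil: "v \<in> W \<Longrightarrow> bs_walk m n \<alpha> W v [] v"
| cons: "e \<in> bs_E m n \<alpha> \<Longrightarrow> bs_src \<alpha> e = v \<Longrightarrow> v \<in> W \<Longrightarrow> bs_walk m n \<alpha> W (bs_tgt \<alpha> e) es w
          \<Longrightarrow> bs_walk m n \<alpha> W v (e # es) w"

definition reduced :: "'a preact \<Rightarrow> (bool \<times> 'a set) list \<Rightarrow> bool" where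
  "reduced \<alpha> es \<longleftrightarrow> (\<forall>i. Suc i < length es \<longrightarrow> es ! Suc i \<noteq> bs_opp \<alpha> (es ! i))"

definition is_forest :: "int \<Rightarrow> int \<Rightarrow> 'a preact \<Rightarrow> 'a set set \<Rightarrow> bool" where
  "is_forest m n \<alpha> W \<longleftrightarrow> \<not> (\<exists>v es. es \<noteq> [] \<and> bs_walk m n \<alpha> W v es v \<and> reduced \<alpha> es)"

definition component :: "int \<Rightarrow> int \<Rightarrow> 'a preact \<Rightarrow> 'a set set \<Rightarrow> 'a set \<Rightarrow> 'a set set" where
  "component m n \<alpha> W v = {w. \<exists>es. bs_walk m n \<alpha> W v es w}"

definition dist_to :: "int \<Rightarrow> int \<Rightarrow> 'a preact \<Rightarrow> 'a set set \<Rightarrow> 'a set \<Rightarrow> nat" where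
  "dist_to m n \<alpha> W0 v = (LEAST k. \<exists>es w. bs_walk m n \<alpha> (bs_V \<alpha>) v es w \<and> w \<in> W0 \<and> length es = k)"

text \<open>Label of a child vertex; pos = the edge from the parent is positive.
  gcd(infinity,k) = |k| and infinite labels stay infinite.\<close>
definition child_lab :: "int \<Rightarrow> int \<Rightarrow> bool \<Rightarrow> enat \<Rightarrow> enat" where
  "child_lab m n pos L = (case L of
      \<infinity> \<Rightarrow> \<infinity>
    | enat l \<Rightarrow> enat (if pos then nat \<bar>m\<bar> * l div gcd l (nat \<bar>n\<bar>)
                       else nat \<bar>n\<bar> * l div gcd l (nat \<bar>m\<bar>)))"

definition max_forest_saturation :: "int \<Rightarrow> int \<Rightarrow> 'a preact \<Rightarrow> 'a preact \<Rightarrow> bool" where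
  "max_forest_saturation m n \<alpha>0 \<alpha> \<longleftrightarrow>
     pre_action m n \<alpha> \<and> saturated \<alpha> \<and> extends \<alpha> \<alpha>0
   \<and> (let V0 = bs_V \<alpha>0; N = bs_V \<alpha> - bs_V \<alpha>0 in
        {e \<in> bs_E m n \<alpha>. bs_src \<alpha> e \<in> V0 \<and> bs_tgt \<alpha> e \<in> V0} = bs_E m n \<alpha>0
      \<and> is_forest m n \<alpha> N
      \<and> (\<forall>v \<in> N. \<exists>!e. e \<in> bs_E m n \<alpha> \<and> bs_src \<alpha> e \<in> V0 \<and> bs_tgt \<alpha> e \<in> component m n \<alpha> N v)
      \<and> (\<forall>e \<in> bs_E m n \<alpha>. bs_tgt \<alpha> e \<in> N
            \<and> dist_to m n \<alpha> V0 (bs_src \<alpha> e) < dist_to m n \<alpha> V0 (bs_tgt \<alpha> e)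
            \<longrightarrow> lab (bs_tgt \<alpha> e) = child_lab m n (fst e) (lab (bs_src \<alpha> e))))"

end

theory Submission
  imports Defs
begin


locale bijb =
  fixes \<alpha> :: "'a preact"
  assumes bij: "bij_betw (bmap \<alpha>) (carrier \<alpha>) (carrier \<alpha>)"
begin

abbreviation "C \<equiv> carrier \<alpha>"
abbreviation "f \<equiv> bmap \<alpha>"
abbreviation "g \<equiv> inv_into (carrier \<alpha>) (bmap \<alpha>)"

lemma f_in: "x \<in> C \<Longrightarrow> f x \<in> C"
  using bij by (auto simp: bij_betw_def)

lemma g_in: "x \<in> C \<Longrightarrow> g x \<in> C"
  using bij by (metis bij_betw_def inv_into_into)

lemma gf: "x \<in> C \<Longrightarrow> g (f x) = x"
  using bij by (simp add: bij_betw_def)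

lemma fg: "x \<in> C \<Longrightarrow> f (g x) = x"
  using bij by (simp add: bij_betw_def f_inv_into_f)

lemma funpow_f_in: "x \<in> C \<Longrightarrow> (f ^^ k) x \<in> C"
  by (induction k) (auto simp: f_in)

lemma funpow_g_in: "x \<in> C \<Longrightarrow> (g ^^ k) x \<in> C"
  by (induction k) (auto simp: g_in)

lemma bp_in: "x \<in> C \<Longrightarrow> bp \<alpha> k x \<in> C"
  by (auto simp: bp_def funpow_f_in funpow_g_in)

lemma bp_0[simp]: "bp \<alpha> 0 x = x"
  by (simp add: bp_def)

lemma bp_succ: assumes xC: "x \<in> C" shows "bp \<alpha> (k+1) x = f (bp \<alpha> k x)"
proof (cases "k \<ge> 0")
  case True
  then have "nat (k+1) = Suc (nat k)" by simp
  then show ?thesis using True by (simp add: bp_def)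
next
  case False
  define j where "j = nat (-k-1)"
  have j: "k = - int (Suc j)" using False by (simp add: j_def)
  then have "nat (- k) = Suc j" by simp
  moreover have "nat (-(k+1)) = j" using j by simp
  ultimately show ?thesis using False j xC
    by (simp add: bp_def fg funpow_g_in)
qed

lemma bp_pred: "x \<in> C \<Longrightarrow> bp \<alpha> (k-1) x = g (bp \<alpha> k x)"
  using bp_succ[of x "k-1"] by (simp add: gf bp_in)

lemma bp_add: "x \<in> C \<Longrightarrow> bp \<alpha> (k + l) x = bp \<alpha> k (bp \<alpha> l x)"
proof (induction k rule: int_induct[where k=0])
  case base then show ?case by simp
next
  case (step1 i)
  have "bp \<alpha> (i + 1 + l) x = bp \<alpha> ((i + l) + 1) x" by (simp add: ac_simps)
  also have "\<dots> = f (bp \<alpha> (i+l) x)" using step1 by (simp add: bp_succ)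
  also have "\<dots> = bp \<alpha> (i+1) (bp \<alpha> l x)" using step1 by (simp add: bp_succ bp_in)
  finally show ?case .
next
  case (step2 i)
  have e: "i - 1 + l = (i + l) - 1" by simp
  have "bp \<alpha> (i - 1 + l) x = bp \<alpha> ((i + l) - 1) x" by (simp only: e)
  also have "\<dots> = g (bp \<alpha> (i+l) x)" using step2 by (simp add: bp_pred)
  also have "\<dots> = bp \<alpha> (i - 1) (bp \<alpha> l x)" using step2 by (simp add: bp_pred bp_in)
  finally show ?case .
qed

lemma bp_1: "bp \<alpha> 1 x = f x"
  by (simp add: bp_def)

lemma bp_m1: "bp \<alpha> (-1) x = g x"
  by (simp add: bp_def)

lemma bp_cancel: "x \<in> C \<Longrightarrow> bp \<alpha> (-k) (bp \<alpha> k x) = x"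
  using bp_add[of x "-k" k] by simp

lemma bp_inj: "x \<in> C \<Longrightarrow> y \<in> C \<Longrightarrow> bp \<alpha> k x = bp \<alpha> k y \<Longrightarrow> x = y"
  using bp_cancel[of x k] bp_cancel[of y k] by metis

lemma orb_mem: "x \<in> C \<Longrightarrow> z \<in> orb \<alpha> k x \<longleftrightarrow> (\<exists>j. z = bp \<alpha> (k*j) x)"
  by (auto simp: orb_def)

lemma orb_self: "x \<in> orb \<alpha> k x"
  unfolding orb_def by (rule CollectI, rule exI[of _ 0], simp)

lemma orb_sub: "x \<in> C \<Longrightarrow> orb \<alpha> k x \<subseteq> C"
  by (auto simp: orb_def bp_in)

lemma orb_shift: "x \<in> C \<Longrightarrow> orb \<alpha> k (bp \<alpha> (k*i) x) = orb \<alpha> k x"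
proof -
  assume x: "x \<in> C"
  have 1: "bp \<alpha> (k*j) (bp \<alpha> (k*i) x) = bp \<alpha> (k*(j+i)) x" for j
    using x by (simp add: bp_add distrib_left)
  show ?thesis
  proof
    show "orb \<alpha> k (bp \<alpha> (k*i) x) \<subseteq> orb \<alpha> k x"
      unfolding orb_def using 1 by blast
    show "orb \<alpha> k x \<subseteq> orb \<alpha> k (bp \<alpha> (k*i) x)"
    proof
      fix z assume "z \<in> orb \<alpha> k x"
      then obtain j where "z = bp \<alpha> (k*j) x" by (auto simp: orb_def)
      then have "z = bp \<alpha> (k*(j - i)) (bp \<alpha> (k*i) x)" using 1[of "j-i"] by simp
      then show "z \<in> orb \<alpha> k (bp \<alpha> (k*i) x)" by (auto simp: orb_def)
    qed
  qed
qed

lemma orb_eq: assumes "x \<in> C" "z \<in> orb \<alpha> k x" shows "orb \<alpha> k z = orb \<alpha> k x"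
proof -
  obtain j where "z = bp \<alpha> (k*j) x" using assms(2) by (auto simp: orb_def)
  then show ?thesis using orb_shift[OF assms(1)] by simp
qed

lemma orb_eq_iff: "x \<in> C \<Longrightarrow> orb \<alpha> k z = orb \<alpha> k x \<longleftrightarrow> z \<in> orb \<alpha> k x"
  using orb_eq[of x z k] orb_self[of z k] by blast

lemma orb_mult_sub: "x \<in> C \<Longrightarrow> orb \<alpha> (k*l) x \<subseteq> orb \<alpha> k x"
  by (auto simp: orb_def mult.assoc)

lemma orb1_sub: "x \<in> C \<Longrightarrow> orb \<alpha> k x \<subseteq> orb \<alpha> 1 x"
  using orb_mult_sub[of x 1 k] by simp

lemma orb1_eq: "x \<in> C \<Longrightarrow> z \<in> orb \<alpha> k x \<Longrightarrow> orb \<alpha> 1 z = orb \<alpha> 1 x"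
  using orb1_sub orb_eq by blast

lemma f_orb1: "x \<in> C \<Longrightarrow> orb \<alpha> 1 (f x) = orb \<alpha> 1 x"
  using orb_shift[of x 1 1] by (simp add: bp_1)

lemma g_orb1: "x \<in> C \<Longrightarrow> orb \<alpha> 1 (g x) = orb \<alpha> 1 x"
  using orb_shift[of x 1 "-1"] by (simp add: bp_m1)

lemma bp_fix_neg: "x \<in> C \<Longrightarrow> bp \<alpha> k x = x \<Longrightarrow> bp \<alpha> (-k) x = x"
  using bp_cancel[of x k] by simp

lemma bp_diff_fix: "x \<in> C \<Longrightarrow> bp \<alpha> a x = bp \<alpha> b x \<Longrightarrow> bp \<alpha> (a - b) x = x"
proof -
  assume x: "x \<in> C" and e: "bp \<alpha> a x = bp \<alpha> b x"
  have "bp \<alpha> (a - b) x = bp \<alpha> (-b) (bp \<alpha> a x)" using x bp_add[of x "-b" a] by simp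
  also have "\<dots> = x" using e bp_cancel[OF x, of b] by simp
  finally show ?thesis .
qed

lemma period_mult: assumes xC: "x \<in> C" and px: "bp \<alpha> p x = x" shows "bp \<alpha> (p*j) x = x"
proof (induction j rule: int_induct[where k=0])
  case base then show ?case by simp
next
  case (step1 i)
  have "bp \<alpha> (p*(i+1)) x = bp \<alpha> (p*i + p) x" by (simp add: algebra_simps)
  also have "\<dots> = bp \<alpha> (p*i) (bp \<alpha> p x)" by (rule bp_add[OF xC])
  finally show ?case using step1 px by simp
next
  case (step2 i)
  have "bp \<alpha> (p*(i-1)) x = bp \<alpha> (p*i + (-p)) x" by (simp add: algebra_simps)
  also have "\<dots> = bp \<alpha> (p*i) (bp \<alpha> (-p) x)" by (rule bp_add[OF xC])
  also have "bp \<alpha> (-p) x = x" using px bp_cancel[OF xC, of p] by simp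
  finally show ?case using step2 by simp
qed

lemma period_finite: "x \<in> C \<Longrightarrow> p > 0 \<Longrightarrow> bp \<alpha> p x = x \<Longrightarrow> orb \<alpha> 1 x \<subseteq> (\<lambda>r. bp \<alpha> r x) ` {0..<p}"
proof
  fix z assume x: "x \<in> C" and p: "p > 0" "bp \<alpha> p x = x" and "z \<in> orb \<alpha> 1 x"
  then obtain j where j: "z = bp \<alpha> j x" by (auto simp: orb_def)
  have "bp \<alpha> j x = bp \<alpha> (j mod p + p * (j div p)) x" by (simp add: mod_mult_div_eq)
  also have "\<dots> = bp \<alpha> (j mod p) (bp \<alpha> (p * (j div p)) x)" using x by (rule bp_add)
  finally have "bp \<alpha> j x = bp \<alpha> (j mod p) (bp \<alpha> (p * (j div p)) x)" .
  also have "\<dots> = bp \<alpha> (j mod p) x" using period_mult x p by simp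
  finally show "z \<in> (\<lambda>r. bp \<alpha> r x) ` {0..<p}" using j p by auto
qed

lemma infinite_free: "x \<in> C \<Longrightarrow> infinite (orb \<alpha> 1 x) \<Longrightarrow> bp \<alpha> k x = x \<Longrightarrow> k = 0"
proof (rule ccontr)
  assume x: "x \<in> C" and inf: "infinite (orb \<alpha> 1 x)" and k: "bp \<alpha> k x = x" "k \<noteq> 0"
  have "bp \<alpha> \<bar>k\<bar> x = x"
    using k x bp_fix_neg[of x k] by (cases "k \<ge> 0") auto
  then have "orb \<alpha> 1 x \<subseteq> (\<lambda>r. bp \<alpha> r x) ` {0..<\<bar>k\<bar>}"
    using period_finite x k by simp
  then show False using inf finite_subset by blast
qed

lemma finite_period: "x \<in> C \<Longrightarrow> finite (orb \<alpha> 1 x) \<Longrightarrow> bp \<alpha> k x = x \<Longrightarrow> int (card (orb \<alpha> 1 x)) dvd k"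
proof -
  assume x: "x \<in> C" and fin: "finite (orb \<alpha> 1 x)" and k: "bp \<alpha> k x = x"
  let ?O = "orb \<alpha> 1 x"
  have "\<not> inj_on (\<lambda>j::int. bp \<alpha> j x) UNIV"
  proof
    assume "inj_on (\<lambda>j::int. bp \<alpha> j x) UNIV"
    moreover have "range (\<lambda>j::int. bp \<alpha> j x) \<subseteq> ?O" by (auto simp: orb_def)
    ultimately have "finite (UNIV :: int set)" using fin by (meson finite_imageD finite_subset)
    then show False by simp
  qed
  then obtain a b where ab: "a \<noteq> b" "bp \<alpha> a x = bp \<alpha> b x" by (auto simp: inj_on_def)
  have "bp \<alpha> (a - b) x = x"
    using ab x by (rule_tac bp_diff_fix) auto
  then have "bp \<alpha> \<bar>a-b\<bar> x = x"
    using x bp_fix_neg[of x "a-b"] by (cases "a - b \<ge> 0") auto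
  then have ex: "\<exists>p>0. bp \<alpha> p x = x" using ab by (intro exI[of _ "\<bar>a-b\<bar>"]) auto
  define P where "P = (LEAST p. p > 0 \<and> bp \<alpha> p x = x)"
  have nat_ex: "\<exists>p::nat. p > 0 \<and> bp \<alpha> (int p) x = x"
  proof -
    obtain p where p: "p > 0" "bp \<alpha> p x = x" using ex by blast
    then show ?thesis by (intro exI[of _ "nat p"]) auto
  qed
  define Q where "Q = (LEAST p::nat. p > 0 \<and> bp \<alpha> (int p) x = x)"
  have Q: "Q > 0" "bp \<alpha> (int Q) x = x" using LeastI_ex[OF nat_ex] by (auto simp: Q_def)
  have Qmin: "\<And>p::nat. 0 < p \<Longrightarrow> p < Q \<Longrightarrow> bp \<alpha> (int p) x \<noteq> x"
    unfolding Q_def using not_less_Least by blast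
  have dv: "int Q dvd j" if "bp \<alpha> j x = x" for j
  proof -
    have "bp \<alpha> j x = bp \<alpha> (j mod int Q + int Q * (j div int Q)) x" by (simp add: mod_mult_div_eq)
    also have "\<dots> = bp \<alpha> (j mod int Q) (bp \<alpha> (int Q * (j div int Q)) x)" using x by (rule bp_add)
    finally have "bp \<alpha> j x = bp \<alpha> (j mod int Q) (bp \<alpha> (int Q * (j div int Q)) x)" .
    also have "\<dots> = bp \<alpha> (j mod int Q) x" using period_mult x Q by simp
    finally have r1: "bp \<alpha> (j mod int Q) x = x" using that by simp
    have r2: "0 \<le> j mod int Q" "j mod int Q < int Q" using Q by auto
    have "j mod int Q = 0"
    proof (rule ccontr)
      assume ne: "j mod int Q \<noteq> 0"
      have "int (nat (j mod int Q)) = j mod int Q" using r2 by simp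
      moreover have "nat (j mod int Q) < Q" using r2 by (simp add: nat_less_iff)
      ultimately show False using Qmin[of "nat (j mod int Q)"] ne r1 r2 by auto
    qed
    then show ?thesis by auto
  qed
  have "?O = (\<lambda>r. bp \<alpha> r x) ` {0..<int Q}"
  proof
    show "?O \<subseteq> (\<lambda>r. bp \<alpha> r x) ` {0..<int Q}" using period_finite[OF x] Q by simp
    show "(\<lambda>r. bp \<alpha> r x) ` {0..<int Q} \<subseteq> ?O" by (auto simp: orb_def)
  qed
  moreover have "inj_on (\<lambda>r. bp \<alpha> r x) {0..<int Q}"
  proof
    fix a b assume a: "a \<in> {0..<int Q}" and b: "b \<in> {0..<int Q}" and e: "bp \<alpha> a x = bp \<alpha> b x"
    have "bp \<alpha> (a - b) x = x"
      using e x by (rule_tac bp_diff_fix) auto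
    then have dab: "int Q dvd (a - b)" by (rule dv)
    show "a = b"
    proof (rule ccontr)
      assume "a \<noteq> b"
      then have "int Q \<le> \<bar>a - b\<bar>" using dvd_imp_le_int[of "a-b" "int Q"] dab by simp
      then show False using a b by (simp add: abs_if split: if_split_asm)
    qed
  qed
  ultimately have "card ?O = Q" by (simp add: card_image)
  then show ?thesis using dv k by simp
qed

end


definition flip :: "letter \<Rightarrow> letter" where "flip s = (fst s, \<not> snd s)"
definition winv :: "word \<Rightarrow> word" where "winv w = rev (map flip w)"

lemma flip_flip[simp]: "flip (flip s) = s" by (simp add: flip_def)
lemma winv_Nil[simp]: "winv [] = []" by (simp add: winv_def)
lemma winv_Cons[simp]: "winv (s # w) = winv w @ [flip s]" by (simp add: winv_def)
lemma winv_app[simp]: "winv (u @ v) = winv v @ winv u" by (simp add: winv_def)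
lemma winv_winv[simp]: "winv (winv w) = w" by (simp add: winv_def rev_map comp_def)

context fixes m n :: int begin

abbreviation beq (infix "\<approx>" 50) where "u \<approx> v \<equiv> bs_eq m n u v"

lemma beq_refl[simp]: "u \<approx> u" by (rule bs_eq.refl)
lemma beq_sym: "u \<approx> v \<Longrightarrow> v \<approx> u" by (rule bs_eq.sym)
lemma beq_trans[trans]: "u \<approx> v \<Longrightarrow> v \<approx> w \<Longrightarrow> u \<approx> w" by (rule bs_eq.trans)

lemma beq_appL: "u \<approx> v \<Longrightarrow> a @ u \<approx> a @ v"
  using bs_eq.cong[of m n u v a "[]"] by simp
lemma beq_appR: "u \<approx> v \<Longrightarrow> u @ c \<approx> v @ c"
  using bs_eq.cong[of m n u v "[]" c] by simp
lemma beq_app: "u \<approx> u' \<Longrightarrow> v \<approx> v' \<Longrightarrow> u @ v \<approx> u' @ v'"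
  by (meson beq_appL beq_appR beq_trans)
lemma beq_mid: "u \<approx> v \<Longrightarrow> a @ u @ c \<approx> a @ v @ c"
  by (rule bs_eq.cong)

lemma beq_cancel1: "[s, flip s] \<approx> []"
  using bs_eq.cancel[of m n "fst s" "snd s"] by (simp add: flip_def)
lemma beq_cancel2: "[flip s, s] \<approx> []"
  using beq_cancel1[of "flip s"] by simp

lemma beq_ins: "a @ c \<approx> a @ [s, flip s] @ c"
  using beq_mid[OF beq_cancel1[of s], of a c] by (simp add: beq_sym)

lemma inv_right: "w @ winv w \<approx> []"
proof (induction w)
  case Nil then show ?case by simp
next
  case (Cons s w)
  have "(s # w) @ winv (s # w) = [s] @ (w @ winv w) @ [flip s]" by simp
  also have "\<dots> \<approx> [s] @ [] @ [flip s]" by (rule beq_mid[OF Cons])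
  also have "[s] @ [] @ [flip s] \<approx> []" using beq_cancel1 by simp
  finally show ?case .
qed

lemma inv_left: "winv w @ w \<approx> []"
  using inv_right[of "winv w"] by simp

lemma cls_eq_iff: "cls m n u = cls m n v \<longleftrightarrow> u \<approx> v"
proof
  assume "cls m n u = cls m n v"
  then have "v \<in> cls m n u" by (auto simp: cls_def)
  then show "u \<approx> v" by (simp add: cls_def)
next
  assume "u \<approx> v"
  then show "cls m n u = cls m n v" unfolding cls_def
    by (auto intro: beq_trans beq_sym)
qed

lemma beq_cancel_mid: "a @ w @ winv w @ c \<approx> a @ c"
  using beq_mid[OF inv_right[of w], of a c] by simp

lemma bpow_nonneg: "k \<ge> 0 \<Longrightarrow> bpow k = replicate (nat k) (B, True)"
  by (simp add: bpow_def)
lemma bpow_neg: "k < 0 \<Longrightarrow> bpow k = replicate (nat (-k)) (B, False)"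
  by (simp add: bpow_def)
lemma bpow_0[simp]: "bpow 0 = []" by (simp add: bpow_def)

lemma winv_bpow: "winv (bpow k) = bpow (-k)"
  by (cases "k = 0") (auto simp: bpow_def winv_def flip_def)

lemma bpow_succ: "(B, True) # bpow k \<approx> bpow (k+1)"
proof (cases "k \<ge> 0")
  case True
  then have "nat (k+1) = Suc (nat k)" by simp
  then show ?thesis using True by (simp add: bpow_nonneg)
next
  case False
  then have e: "nat (-k) = Suc (nat (-(k+1)))" by simp
  have "bpow k = (B, False) # bpow (k+1)"
    using False e by (cases "k + 1 = 0") (auto simp: bpow_def)
  then have "(B, True) # bpow k = [(B,True), flip (B,True)] @ bpow (k+1)" by (simp add: flip_def)
  also have "\<dots> \<approx> [] @ bpow (k+1)" by (rule beq_appR[OF beq_cancel1])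
  finally show ?thesis by simp
qed

lemma bpow_pred: "(B, False) # bpow k \<approx> bpow (k-1)"
proof (cases "k \<le> 0")
  case True
  then have "nat (-(k-1)) = Suc (nat (-k))" by simp
  then show ?thesis using True by (cases "k = 0") (auto simp: bpow_def)
next
  case False
  then have e: "nat k = Suc (nat (k-1))" by simp
  have "bpow k = (B, True) # bpow (k-1)"
    using False e by (auto simp: bpow_def)
  then have "(B, False) # bpow k = [(B,False), flip (B,False)] @ bpow (k-1)" by (simp add: flip_def)
  also have "\<dots> \<approx> [] @ bpow (k-1)" by (rule beq_appR[OF beq_cancel1])
  finally show ?thesis by simp
qed

lemma bpow_add: "bpow a @ bpow b \<approx> bpow (a + b)"
proof (induction a rule: int_induct[where k=0])
  case base then show ?case by simp
next
  case (step1 i)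
  have "bpow (i+1) @ bpow b \<approx> ((B,True) # bpow i) @ bpow b"
    by (rule beq_appR[OF beq_sym[OF bpow_succ]])
  also have "((B,True) # bpow i) @ bpow b = [(B,True)] @ (bpow i @ bpow b)" by simp
  also have "\<dots> \<approx> [(B,True)] @ bpow (i + b)" by (rule beq_appL[OF step1(2)])
  also have "\<dots> \<approx> bpow (i + b + 1)" using bpow_succ by simp
  finally show ?case by (simp add: ac_simps)
next
  case (step2 i)
  have "bpow (i-1) @ bpow b \<approx> ((B,False) # bpow i) @ bpow b"
    by (rule beq_appR[OF beq_sym[OF bpow_pred]])
  also have "((B,False) # bpow i) @ bpow b = [(B,False)] @ (bpow i @ bpow b)" by simp
  also have "\<dots> \<approx> [(B,False)] @ bpow (i + b)" by (rule beq_appL[OF step2(2)])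
  also have "\<dots> \<approx> bpow (i + b - 1)" using bpow_pred by simp
  finally show ?case by (simp add: algebra_simps)
qed

definition R :: "letter \<Rightarrow> int \<Rightarrow> word" where "R s k = [s] @ bpow k @ [flip s]"

lemma R_add: "R s a @ R s b \<approx> R s (a + b)"
proof -
  have "R s a @ R s b = [s] @ bpow a @ ([flip s, s]) @ bpow b @ [flip s]" by (simp add: R_def)
  also have "\<dots> \<approx> [s] @ bpow a @ [] @ bpow b @ [flip s]"
    by (rule beq_appL, rule beq_appL, rule beq_appR, rule beq_cancel2)
  also have "[s] @ bpow a @ [] @ bpow b @ [flip s] = [s] @ (bpow a @ bpow b) @ [flip s]" by simp
  also have "\<dots> \<approx> [s] @ bpow (a+b) @ [flip s]" by (rule beq_mid[OF bpow_add])
  finally show ?thesis by (simp add: R_def)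
qed

lemma R_0: "R s 0 \<approx> []"
  using beq_cancel1[of s] by (simp add: R_def)

lemma R_pow: assumes h: "R s p \<approx> bpow q" shows "R s (p * i) \<approx> bpow (q * i)"
proof (induction i rule: int_induct[where k=0])
  case base then show ?case using R_0 by simp
next
  case (step1 i)
  have "R s (p*(i+1)) = R s (p*i + p)" by (simp add: algebra_simps)
  also have "\<dots> \<approx> R s (p*i) @ R s p" by (rule beq_sym[OF R_add])
  also have "\<dots> \<approx> bpow (q*i) @ bpow q" by (rule beq_app[OF step1(2) h])
  also have "\<dots> \<approx> bpow (q*i + q)" by (rule bpow_add)
  finally show ?case by (simp add: algebra_simps)
next
  case (step2 i)
  have inv: "R s (-p) \<approx> bpow (-q)"
  proof -
    have "R s (-p) \<approx> R s (-p) @ (bpow q @ bpow (-q))"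
      using beq_appL[OF beq_sym[OF bpow_add[of q "-q"]], of "R s (-p)"] by simp
    also have "\<dots> \<approx> R s (-p) @ R s p @ bpow (-q)" by (rule beq_appL, rule beq_appR, rule beq_sym[OF h])
    also have "\<dots> = (R s (-p) @ R s p) @ bpow (-q)" by simp
    also have "\<dots> \<approx> R s (-p + p) @ bpow (-q)" by (rule beq_appR[OF R_add])
    also have "\<dots> \<approx> [] @ bpow (-q)" using beq_appR[OF R_0[of s]] by simp
    finally show ?thesis by simp
  qed
  have "R s (p*(i-1)) = R s (p*i + (-p))" by (simp add: algebra_simps)
  also have "\<dots> \<approx> R s (p*i) @ R s (-p)" by (rule beq_sym[OF R_add])
  also have "\<dots> \<approx> bpow (q*i) @ bpow (-q)" by (rule beq_app[OF step2(2) inv])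
  also have "\<dots> \<approx> bpow (q*i + (-q))" by (rule bpow_add)
  finally show ?case by (simp add: algebra_simps)
qed

lemma R_T_m: "R (T,True) m \<approx> bpow n"
  using bs_eq.relator[of m n] by (simp add: R_def flip_def)

lemma R_Tinv_n: "R (T,False) n \<approx> bpow m"
proof -
  have "R (T,False) n = [(T,False)] @ bpow n @ [(T,True)]" by (simp add: R_def flip_def)
  also have "\<dots> \<approx> [(T,False)] @ R (T,True) m @ [(T,True)]" by (rule beq_mid[OF beq_sym[OF R_T_m]])
  also have "\<dots> = [(T,False), (T,True)] @ bpow m @ [(T,False), (T,True)]" by (simp add: R_def flip_def)
  also have "\<dots> \<approx> [] @ bpow m @ [(T,False), (T,True)]"
    by (rule beq_appR, rule beq_cancel2[of "(T,True)", simplified flip_def, simplified])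
  also have "\<dots> \<approx> bpow m @ []"
    using beq_appL[OF beq_cancel2[of "(T,True)"], of "bpow m"] by (simp add: flip_def)
  finally show ?thesis by simp
qed

lemma relpow_T: "[(T,True)] @ bpow (m*i) @ [(T,False)] \<approx> bpow (n*i)"
  using R_pow[OF R_T_m, of i] by (simp add: R_def flip_def)

lemma relpow_Tinv: "[(T,False)] @ bpow (n*i) @ [(T,True)] \<approx> bpow (m*i)"
  using R_pow[OF R_Tinv_n, of i] by (simp add: R_def flip_def)

fun expB :: "word \<Rightarrow> int" where
  "expB [] = 0"
| "expB (s # w) = (if snd s then 1 else -1) + expB w"

lemma bword_bpow: "\<forall>s\<in>set w. fst s = B \<Longrightarrow> w \<approx> bpow (expB w)"
proof (induction w)
  case Nil then show ?case by simp
next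
  case (Cons s w)
  then have IH: "w \<approx> bpow (expB w)" and sB: "s = (B, snd s)" by (auto simp: prod_eq_iff)
  have "s # w = [s] @ w" by simp
  also have "\<dots> \<approx> [s] @ bpow (expB w)" by (rule beq_appL[OF IH])
  also have "\<dots> \<approx> bpow (expB (s # w))"
  proof (cases "snd s")
    case True
    then show ?thesis using bpow_succ[of "expB w"] sB by (simp add: ac_simps)
  next
    case False
    then show ?thesis using bpow_pred[of "expB w"] sB by (simp add: ac_simps)
  qed
  finally show ?case .
qed

end


definition tau :: "'a preact \<Rightarrow> 'a \<Rightarrow> 'a" where "tau \<alpha> x = the (tmap \<alpha> x)"
definition tinv :: "'a preact \<Rightarrow> 'a \<Rightarrow> 'a" where "tinv \<alpha> x = (THE z. tmap \<alpha> z = Some x)"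

fun step :: "'a preact \<Rightarrow> 'a \<Rightarrow> letter \<Rightarrow> 'a" where
  "step \<alpha> x (B, True) = bmap \<alpha> x"
| "step \<alpha> x (B, False) = inv_into (carrier \<alpha>) (bmap \<alpha>) x"
| "step \<alpha> x (T, True) = tau \<alpha> x"
| "step \<alpha> x (T, False) = tinv \<alpha> x"

definition act :: "'a preact \<Rightarrow> 'a \<Rightarrow> word \<Rightarrow> 'a" where
  "act \<alpha> x w = foldl (step \<alpha>) x w"

lemma act_Nil[simp]: "act \<alpha> x [] = x" by (simp add: act_def)
lemma act_Cons[simp]: "act \<alpha> x (s # w) = act \<alpha> (step \<alpha> x s) w" by (simp add: act_def)
lemma act_app: "act \<alpha> x (u @ v) = act \<alpha> (act \<alpha> x u) v" by (simp add: act_def)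

locale pa = bijb \<alpha> for \<alpha> :: "'a preact" +
  fixes m n :: int
  assumes pa: "pre_action m n \<alpha>"

locale spa = pa +
  assumes sat: "saturated \<alpha>"
begin

lemma dom_eq: "dom (tmap \<alpha>) = C" using sat by (simp add: saturated_def)
lemma ran_eq: "ran (tmap \<alpha>) = C" using sat by (simp add: saturated_def)
lemma tinj: "inj_on (tmap \<alpha>) C" using pa dom_eq by (simp add: pre_action_def)

lemma tau_Some: assumes "x \<in> C" shows "tmap \<alpha> x = Some (tau \<alpha> x)"
proof -
  obtain y where "tmap \<alpha> x = Some y" using assms dom_eq by (auto simp: dom_def)
  then show ?thesis by (simp add: tau_def)
qed

lemma tau_in: "x \<in> C \<Longrightarrow> tau \<alpha> x \<in> C"
  using tau_Some ran_eq by (metis ranI)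

lemma tmap_Some_in: "tmap \<alpha> z = Some x \<Longrightarrow> z \<in> C"
  using dom_eq by auto

lemma tmap_unique: "tmap \<alpha> z = Some x \<Longrightarrow> tmap \<alpha> z' = Some x \<Longrightarrow> z = z'"
  using tinj tmap_Some_in by (metis inj_on_def)

lemma tinv_eq: "tmap \<alpha> z = Some x \<Longrightarrow> tinv \<alpha> x = z"
  unfolding tinv_def by (rule the_equality) (auto intro: tmap_unique)

lemma tinv_prop: assumes "x \<in> C" shows "tmap \<alpha> (tinv \<alpha> x) = Some x"
proof -
  obtain z where "tmap \<alpha> z = Some x" using assms ran_eq by (auto simp: ran_def)
  then show ?thesis using tinv_eq by simp
qed

lemma tinv_in: "x \<in> C \<Longrightarrow> tinv \<alpha> x \<in> C"
  using tinv_prop tmap_Some_in by blast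

lemma tau_tinv: "x \<in> C \<Longrightarrow> tau \<alpha> (tinv \<alpha> x) = x"
  using tinv_prop by (simp add: tau_def)

lemma tinv_tau: "x \<in> C \<Longrightarrow> tinv \<alpha> (tau \<alpha> x) = x"
  using tau_Some tinv_eq by blast

lemma tau_inj: "x \<in> C \<Longrightarrow> y \<in> C \<Longrightarrow> tau \<alpha> x = tau \<alpha> y \<Longrightarrow> x = y"
  by (metis tinv_tau)

lemma step_in: assumes "x \<in> C" shows "step \<alpha> x s \<in> C"
proof -
  obtain g b where s: "s = (g, b)" by (cases s)
  show ?thesis unfolding s using assms by (cases g; cases b) (auto simp: f_in g_in tau_in tinv_in)
qed

lemma act_in: "x \<in> C \<Longrightarrow> act \<alpha> x w \<in> C"
  by (induction w arbitrary: x) (auto simp: step_in)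

lemma step_flip: assumes "x \<in> C" shows "step \<alpha> (step \<alpha> x s) (flip s) = x"
proof -
  obtain g b where s: "s = (g, b)" by (cases s)
  show ?thesis unfolding s using assms by (cases g; cases b) (auto simp: flip_def gf fg tinv_tau tau_tinv)
qed

lemma act_winv: "x \<in> C \<Longrightarrow> act \<alpha> (act \<alpha> x w) (winv w) = x"
proof (induction w arbitrary: x)
  case Nil then show ?case by simp
next
  case (Cons s w)
  have "act \<alpha> (act \<alpha> x (s # w)) (winv (s # w)) = step \<alpha> (act \<alpha> (act \<alpha> (step \<alpha> x s) w) (winv w)) (flip s)"
    by (simp add: act_app)
  also have "\<dots> = x" using Cons step_in step_flip by simp
  finally show ?case .
qed

lemma path_iff: "sch_path \<alpha> x w y \<longleftrightarrow> x \<in> C \<and> y = act \<alpha> x w"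
proof
  assume "sch_path \<alpha> x w y"
  then show "x \<in> C \<and> y = act \<alpha> x w"
  proof (induction rule: sch_path.induct)
    case (t_fwd x z w y) then show ?case using tmap_Some_in by (auto simp: tau_def)
  next
    case (t_bwd z x w y) then show ?case using tinv_eq by (auto simp: ran_eq[symmetric] ranI)
  qed auto
next
  assume "x \<in> C \<and> y = act \<alpha> x w"
  then show "sch_path \<alpha> x w y"
  proof (induction w arbitrary: x)
    case Nil then show ?case by (auto intro: sch_path.nil)
  next
    case (Cons s w)
    then have x: "x \<in> C" and IH: "sch_path \<alpha> (step \<alpha> x s) w y" using step_in by auto
    obtain g b where s: "s = (g, b)" by (cases s)
    show ?case unfolding s
    proof (cases g; cases b)
      assume "g = B" "b" then show "sch_path \<alpha> x ((g,b) # w) y" using IH x s by (auto intro: sch_path.b_fwd)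
    next
      assume "g = B" "\<not> b" then show "sch_path \<alpha> x ((g,b) # w) y" using IH x s by (auto intro: sch_path.b_bwd)
    next
      assume "g = T" "b" then show "sch_path \<alpha> x ((g,b) # w) y" using IH x s tau_Some by (auto intro: sch_path.t_fwd)
    next
      assume "g = T" "\<not> b" then show "sch_path \<alpha> x ((g,b) # w) y" using IH x s tinv_prop by (auto intro: sch_path.t_bwd)
    qed
  qed
qed

lemma act_bpow: "x \<in> C \<Longrightarrow> act \<alpha> x (bpow k) = bp \<alpha> k x"
proof (cases "k \<ge> 0")
  case True
  assume x: "x \<in> C"
  have "act \<alpha> x (replicate j (B,True)) = (f ^^ j) x" for j
    by (induction j arbitrary: x) (auto simp: funpow_swap1)
  then show ?thesis using True by (simp add: bpow_def bp_def)
next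
  case False
  assume x: "x \<in> C"
  have "act \<alpha> x (replicate j (B,False)) = (g ^^ j) x" for j
    by (induction j arbitrary: x) (auto simp: funpow_swap1)
  then show ?thesis using False by (simp add: bpow_def bp_def)
qed

lemma rel1: "x \<in> C \<Longrightarrow> bp \<alpha> m (tau \<alpha> x) = tau \<alpha> (bp \<alpha> n x)"
  using pa dom_eq by (simp add: pre_action_def tau_def)

lemma tau_bp: assumes x: "x \<in> C" shows "tau \<alpha> (bp \<alpha> (n*j) x) = bp \<alpha> (m*j) (tau \<alpha> x)"
proof (induction j rule: int_induct[where k=0])
  case base then show ?case by simp
next
  case (step1 i)
  have "tau \<alpha> (bp \<alpha> (n*(i+1)) x) = tau \<alpha> (bp \<alpha> n (bp \<alpha> (n*i) x))"
    using bp_add[OF x, of n "n*i"] by (simp add: algebra_simps)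
  also have "\<dots> = bp \<alpha> m (tau \<alpha> (bp \<alpha> (n*i) x))" using rel1 bp_in x by simp
  also have "\<dots> = bp \<alpha> m (bp \<alpha> (m*i) (tau \<alpha> x))" using step1 by simp
  also have "\<dots> = bp \<alpha> (m + m*i) (tau \<alpha> x)" using bp_add[OF tau_in[OF x], of m "m*i"] by simp
  also have "m + m*i = m*(i+1)" by (simp add: algebra_simps)
  finally show ?case .
next
  case (step2 i)
  define y where "y = bp \<alpha> (n*(i-1)) x"
  have y: "y \<in> C" using x bp_in by (simp add: y_def)
  have "bp \<alpha> n y = bp \<alpha> (n + n*(i-1)) x" using bp_add[OF x, of n "n*(i-1)"] by (simp add: y_def)
  also have "n + n*(i-1) = n*i" by (simp add: algebra_simps)
  finally have "tau \<alpha> (bp \<alpha> n y) = bp \<alpha> (m*i) (tau \<alpha> x)" using step2 by simp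
  then have "bp \<alpha> m (tau \<alpha> y) = bp \<alpha> (m*i) (tau \<alpha> x)" using rel1 y by simp
  then have "bp \<alpha> (-m) (bp \<alpha> m (tau \<alpha> y)) = bp \<alpha> (-m) (bp \<alpha> (m*i) (tau \<alpha> x))" by simp
  then have "tau \<alpha> y = bp \<alpha> (-m + m*i) (tau \<alpha> x)"
    using bp_cancel[OF tau_in[OF y]] bp_add[OF tau_in[OF x], of "-m" "m*i"] by simp
  then show ?case by (simp add: y_def algebra_simps)
qed

lemma act_beq: "bs_eq m n u v \<Longrightarrow> x \<in> C \<Longrightarrow> act \<alpha> x u = act \<alpha> x v"
proof (induction arbitrary: x rule: bs_eq.induct)
  case (cong u v a c)
  then show ?case by (simp add: act_app act_in)
next
  case (cancel g s)
  then show ?case using step_flip[of x "(g,s)"] by (simp add: flip_def)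
next
  case relator
  have "act \<alpha> x ([(T, True)] @ bpow m @ [(T, False)]) = tinv \<alpha> (bp \<alpha> m (tau \<alpha> x))"
    using relator tau_in by (simp add: act_app act_bpow)
  also have "\<dots> = bp \<alpha> n x" using rel1 relator tinv_tau bp_in by simp
  finally show ?case using relator by (simp add: act_bpow)
qed auto

end


context spa begin

abbreviation V :: "'a \<Rightarrow> 'a set" where "V x \<equiv> orb \<alpha> 1 x"

lemma tau_img: assumes x: "x \<in> C" shows "tau \<alpha> ` orb \<alpha> n x = orb \<alpha> m (tau \<alpha> x)"
proof
  show "tau \<alpha> ` orb \<alpha> n x \<subseteq> orb \<alpha> m (tau \<alpha> x)"
    using tau_bp[OF x] by (auto simp: orb_def)
  show "orb \<alpha> m (tau \<alpha> x) \<subseteq> tau \<alpha> ` orb \<alpha> n x"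
  proof
    fix z assume "z \<in> orb \<alpha> m (tau \<alpha> x)"
    then obtain j where "z = bp \<alpha> (m*j) (tau \<alpha> x)" by (auto simp: orb_def)
    then have "z = tau \<alpha> (bp \<alpha> (n*j) x)" using tau_bp[OF x] by simp
    then show "z \<in> tau \<alpha> ` orb \<alpha> n x" by (auto simp: orb_def)
  qed
qed

lemma opp_pos: "x \<in> C \<Longrightarrow> bs_opp \<alpha> (True, orb \<alpha> n x) = (False, orb \<alpha> m (tau \<alpha> x))"
  using tau_img by (simp add: bs_opp_def tau_def[abs_def])

lemma opp_neg: assumes x: "x \<in> C" shows "bs_opp \<alpha> (False, orb \<alpha> m (tau \<alpha> x)) = (True, orb \<alpha> n x)"
proof -
  have "{z. \<exists>y \<in> orb \<alpha> m (tau \<alpha> x). tmap \<alpha> z = Some y} = orb \<alpha> n x"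
  proof
    show "{z. \<exists>y \<in> orb \<alpha> m (tau \<alpha> x). tmap \<alpha> z = Some y} \<subseteq> orb \<alpha> n x"
    proof
      fix z assume "z \<in> {z. \<exists>y \<in> orb \<alpha> m (tau \<alpha> x). tmap \<alpha> z = Some y}"
      then obtain j where "tmap \<alpha> z = Some (bp \<alpha> (m*j) (tau \<alpha> x))" by (auto simp: orb_def)
      moreover have "tmap \<alpha> (bp \<alpha> (n*j) x) = Some (bp \<alpha> (m*j) (tau \<alpha> x))"
        using tau_Some[OF bp_in[OF x]] tau_bp[OF x] by simp
      ultimately have "z = bp \<alpha> (n*j) x" by (rule tmap_unique)
      then show "z \<in> orb \<alpha> n x" by (auto simp: orb_def)
    qed
    show "orb \<alpha> n x \<subseteq> {z. \<exists>y \<in> orb \<alpha> m (tau \<alpha> x). tmap \<alpha> z = Some y}"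
    proof
      fix z assume "z \<in> orb \<alpha> n x"
      then obtain j where z: "z = bp \<alpha> (n*j) x" by (auto simp: orb_def)
      have "tmap \<alpha> z = Some (bp \<alpha> (m*j) (tau \<alpha> x))"
        using tau_Some[OF bp_in[OF x]] tau_bp[OF x] z by simp
      then show "z \<in> {z. \<exists>y \<in> orb \<alpha> m (tau \<alpha> x). tmap \<alpha> z = Some y}" by (auto simp: orb_def)
    qed
  qed
  then show ?thesis by (simp add: bs_opp_def)
qed

lemma E_cases: "e \<in> bs_E m n \<alpha> \<longleftrightarrow> (\<exists>x \<in> C. e = (True, orb \<alpha> n x) \<or> e = (False, orb \<alpha> m (tau \<alpha> x)))"
proof
  assume "e \<in> bs_E m n \<alpha>"
  then consider x where "x \<in> C" "e = (True, orb \<alpha> n x)" | y where "y \<in> C" "e = (False, orb \<alpha> m y)"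
    unfolding bs_E_def using dom_eq ran_eq by blast
  then show "\<exists>x \<in> C. e = (True, orb \<alpha> n x) \<or> e = (False, orb \<alpha> m (tau \<alpha> x))"
  proof cases
    case 1 then show ?thesis by blast
  next
    case (2 y)
    then have "e = (False, orb \<alpha> m (tau \<alpha> (tinv \<alpha> y)))" using tau_tinv by simp
    then show ?thesis using tinv_in 2 by blast
  qed
next
  assume "\<exists>x \<in> C. e = (True, orb \<alpha> n x) \<or> e = (False, orb \<alpha> m (tau \<alpha> x))"
  then obtain x where x: "x \<in> C" "e = (True, orb \<alpha> n x) \<or> e = (False, orb \<alpha> m (tau \<alpha> x))" by blast
  have "x \<in> dom (tmap \<alpha>)" "tau \<alpha> x \<in> ran (tmap \<alpha>)" using x dom_eq ran_eq tau_in by auto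
  then show "e \<in> bs_E m n \<alpha>"
    unfolding bs_E_def using x by blast
qed

lemma E_pos: "x \<in> C \<Longrightarrow> (True, orb \<alpha> n x) \<in> bs_E m n \<alpha>"
  using E_cases by blast
lemma E_neg: "x \<in> C \<Longrightarrow> (False, orb \<alpha> m x) \<in> bs_E m n \<alpha>"
proof -
  assume x: "x \<in> C"
  then have "(False, orb \<alpha> m x) = (False, orb \<alpha> m (tau \<alpha> (tinv \<alpha> x)))" using tau_tinv by simp
  then show ?thesis using E_cases tinv_in x by blast
qed

lemma opp_E: assumes "e \<in> bs_E m n \<alpha>" shows "bs_opp \<alpha> e \<in> bs_E m n \<alpha>"
proof -
  obtain x where x: "x \<in> C" "e = (True, orb \<alpha> n x) \<or> e = (False, orb \<alpha> m (tau \<alpha> x))"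
    using assms E_cases by blast
  then have "bs_opp \<alpha> e = (False, orb \<alpha> m (tau \<alpha> x)) \<or> bs_opp \<alpha> e = (True, orb \<alpha> n x)"
    using opp_pos opp_neg by auto
  then show ?thesis using E_cases x(1) by blast
qed

lemma opp_opp: assumes "e \<in> bs_E m n \<alpha>" shows "bs_opp \<alpha> (bs_opp \<alpha> e) = e"
proof -
  obtain x where x: "x \<in> C" "e = (True, orb \<alpha> n x) \<or> e = (False, orb \<alpha> m (tau \<alpha> x))"
    using assms E_cases by blast
  then show ?thesis using opp_pos opp_neg by auto
qed

lemma opp_ne: "bs_opp \<alpha> e \<noteq> e"
  by (cases e) (auto simp: bs_opp_def)

lemma opp_fst: "fst (bs_opp \<alpha> e) = (\<not> fst e)"
  by (auto simp: bs_opp_def)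

lemma src_orb: assumes x: "x \<in> C" shows "bs_src \<alpha> (b, orb \<alpha> k x) = V x"
proof -
  have "\<And>z. z \<in> orb \<alpha> k x \<Longrightarrow> V z = V x" using orb1_eq x by blast
  then have "(\<Union>z \<in> orb \<alpha> k x. V z) = (\<Union>z \<in> orb \<alpha> k x. V x)" by (rule SUP_cong[OF HOL.refl])
  also have "\<dots> = V x" using orb_self[of x k] by blast
  finally show ?thesis by (simp add: bs_src_def)
qed

lemma tgt_pos: "x \<in> C \<Longrightarrow> bs_tgt \<alpha> (True, orb \<alpha> n x) = V (tau \<alpha> x)"
  by (simp add: bs_tgt_def opp_pos src_orb tau_in)

lemma tgt_neg: "x \<in> C \<Longrightarrow> bs_tgt \<alpha> (False, orb \<alpha> m (tau \<alpha> x)) = V x"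
  by (simp add: bs_tgt_def opp_neg src_orb)

lemma tgt_opp: "e \<in> bs_E m n \<alpha> \<Longrightarrow> bs_tgt \<alpha> (bs_opp \<alpha> e) = bs_src \<alpha> e"
  by (simp add: bs_tgt_def opp_opp)

lemma V_in: "x \<in> C \<Longrightarrow> V x \<in> bs_V \<alpha>"
  by (simp add: bs_V_def)

lemma src_V: assumes "e \<in> bs_E m n \<alpha>" shows "bs_src \<alpha> e \<in> bs_V \<alpha>"
proof -
  obtain x where x: "x \<in> C" "e = (True, orb \<alpha> n x) \<or> e = (False, orb \<alpha> m (tau \<alpha> x))"
    using assms E_cases by blast
  then show ?thesis using src_orb V_in tau_in by auto
qed

lemma tgt_V: "e \<in> bs_E m n \<alpha> \<Longrightarrow> bs_tgt \<alpha> e \<in> bs_V \<alpha>"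
  using src_V opp_E by (simp add: bs_tgt_def)

definition tedge :: "'a \<Rightarrow> bool \<Rightarrow> bool \<times> 'a set" where
  "tedge x b = (if b then (True, orb \<alpha> n x) else (False, orb \<alpha> m x))"

lemma tedge_E: "x \<in> C \<Longrightarrow> tedge x b \<in> bs_E m n \<alpha>"
  by (simp add: tedge_def E_pos E_neg)

lemma tedge_src: "x \<in> C \<Longrightarrow> bs_src \<alpha> (tedge x b) = V x"
  by (simp add: tedge_def src_orb)

lemma tedge_tgt: assumes x: "x \<in> C" shows "bs_tgt \<alpha> (tedge x b) = V (step \<alpha> x (T, b))"
proof (cases b)
  case True then show ?thesis using x by (simp add: tedge_def tgt_pos)
next
  case False
  have "orb \<alpha> m x = orb \<alpha> m (tau \<alpha> (tinv \<alpha> x))" using tau_tinv x by simp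
  then show ?thesis using False tgt_neg tinv_in x by (simp add: tedge_def)
qed

lemma V_stepB: "x \<in> C \<Longrightarrow> V (step \<alpha> x (B, b)) = V x"
  by (cases b) (auto simp: f_orb1 g_orb1)

lemma V_eq_iff: "x \<in> C \<Longrightarrow> y \<in> C \<Longrightarrow> V x = V y \<longleftrightarrow> x \<in> V y"
  using orb_eq_iff by blast

lemma edge_point: "e \<in> bs_E m n \<alpha> \<Longrightarrow> \<exists>x b. x \<in> C \<and> e = tedge x b"
proof -
  assume "e \<in> bs_E m n \<alpha>"
  then obtain x where xC: "x \<in> C" and ex: "e = (True, orb \<alpha> n x) \<or> e = (False, orb \<alpha> m (tau \<alpha> x))"
    using E_cases by blast
  from ex show ?thesis
  proof
    assume "e = (True, orb \<alpha> n x)"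
    then have "e = tedge x True" by (simp add: tedge_def)
    then show ?thesis using xC by blast
  next
    assume "e = (False, orb \<alpha> m (tau \<alpha> x))"
    then have "e = tedge (tau \<alpha> x) False" by (simp add: tedge_def)
    then show ?thesis using xC tau_in by blast
  qed
qed

end


definition revw :: "'a preact \<Rightarrow> (bool \<times> 'a set) list \<Rightarrow> (bool \<times> 'a set) list" where
  "revw \<alpha> es = rev (map (bs_opp \<alpha>) es)"

lemma walk_W: "bs_walk m n \<alpha> W v es w \<Longrightarrow> v \<in> W \<and> w \<in> W"
  by (induction rule: bs_walk.induct) auto

lemma walk_mono: "bs_walk m n \<alpha> W v es w \<Longrightarrow> W \<subseteq> W' \<Longrightarrow> bs_walk m n \<alpha> W' v es w"
  by (induction rule: bs_walk.induct) (auto intro: bs_walk.intros)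

lemma walk_edges: "bs_walk m n \<alpha> W v es w \<Longrightarrow> set es \<subseteq> bs_E m n \<alpha>"
  by (induction rule: bs_walk.induct) auto

lemma walk_Nil: "bs_walk m n \<alpha> W v [] w \<longleftrightarrow> v \<in> W \<and> w = v"
  by (auto elim: bs_walk.cases intro: bs_walk.intros)

lemma walk_Cons: "bs_walk m n \<alpha> W v (e # es) w \<longleftrightarrow>
    e \<in> bs_E m n \<alpha> \<and> bs_src \<alpha> e = v \<and> v \<in> W \<and> bs_walk m n \<alpha> W (bs_tgt \<alpha> e) es w"
  by (auto elim: bs_walk.cases intro: bs_walk.intros)

lemma walk_app: "bs_walk m n \<alpha> W v (Pl @ Ql) w \<longleftrightarrow> (\<exists>u. bs_walk m n \<alpha> W v Pl u \<and> bs_walk m n \<alpha> W u Ql w)"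
proof (induction Pl arbitrary: v)
  case Nil
  then show ?case using walk_W[of m n \<alpha> W v Ql w] by (auto simp: walk_Nil)
next
  case (Cons e Pl)
  then show ?case by (auto simp: walk_Cons)
qed

lemma walk_single: "bs_walk m n \<alpha> W v [e] w \<longleftrightarrow>
    e \<in> bs_E m n \<alpha> \<and> bs_src \<alpha> e = v \<and> v \<in> W \<and> w = bs_tgt \<alpha> e \<and> w \<in> W"
  by (auto simp: walk_Cons walk_Nil)

definition scount :: "'a preact \<Rightarrow> bool \<times> 'a set \<Rightarrow> (bool \<times> 'a set) list \<Rightarrow> int" where
  "scount \<alpha> e0 es = int (count_list es e0) - int (count_list es (bs_opp \<alpha> e0))"

lemma scount_app: "scount \<alpha> e0 (Pl @ Ql) = scount \<alpha> e0 Pl + scount \<alpha> e0 Ql"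
  by (simp add: scount_def)

lemma scount_Nil[simp]: "scount \<alpha> e0 [] = 0"
  by (simp add: scount_def)

context spa begin

lemma walk_rev: "bs_walk m n \<alpha> W v es w \<Longrightarrow> bs_walk m n \<alpha> W w (revw \<alpha> es) v"
proof (induction rule: bs_walk.induct)
  case (nil v) then show ?case by (simp add: revw_def walk_Nil)
next
  case (cons e v es w)
  have "revw \<alpha> (e # es) = revw \<alpha> es @ [bs_opp \<alpha> e]" by (simp add: revw_def)
  moreover have "bs_walk m n \<alpha> W (bs_tgt \<alpha> e) [bs_opp \<alpha> e] v"
    using cons walk_W[OF cons.hyps(4)] by (simp add: walk_single opp_E tgt_opp) (simp add: bs_tgt_def)
  ultimately show ?case using cons by (auto simp: walk_app)
qed

lemma revw_set: "x \<in> set (revw \<alpha> es) \<longleftrightarrow> (\<exists>e\<in>set es. x = bs_opp \<alpha> e)"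
  by (auto simp: revw_def)

lemma opp_eq_iff: assumes "e \<in> bs_E m n \<alpha>" "e0 \<in> bs_E m n \<alpha>"
  shows "bs_opp \<alpha> e = e0 \<longleftrightarrow> e = bs_opp \<alpha> e0"
  using opp_opp[OF assms(1)] opp_opp[OF assms(2)] by auto

lemma reduce_walk:
  "bs_walk m n \<alpha> W v es w \<Longrightarrow> e0 \<in> bs_E m n \<alpha> \<Longrightarrow>
   \<exists>es'. bs_walk m n \<alpha> W v es' w \<and> reduced \<alpha> es' \<and> scount \<alpha> e0 es' = scount \<alpha> e0 es"
proof (induction "length es" arbitrary: es rule: less_induct)
  case less
  show ?case
  proof (cases "reduced \<alpha> es")
    case True then show ?thesis using less by blast
  next
    case False
    then obtain i where i: "Suc i < length es" "es ! Suc i = bs_opp \<alpha> (es ! i)"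
      by (auto simp: reduced_def)
    define e where "e = es ! i"
    define Pl where "Pl = take i es"
    define Ql where "Ql = drop (Suc (Suc i)) es"
    have es: "es = Pl @ [e, bs_opp \<alpha> e] @ Ql"
      unfolding Pl_def Ql_def e_def using i
    proof -
      have d: "drop (Suc i) es = es ! Suc i # drop (Suc (Suc i)) es" using i(1) by (simp add: Cons_nth_drop_Suc)
      have "es = take i es @ es ! i # drop (Suc i) es" using i(1) by (simp add: id_take_nth_drop)
      then show "es = take i es @ [es ! i, bs_opp \<alpha> (es ! i)] @ drop (Suc (Suc i)) es" using d i(2) by simp
    qed
    from less.prems(1) obtain u1 u2 where
      wA: "bs_walk m n \<alpha> W v Pl u1" and wE: "bs_walk m n \<alpha> W u1 [e, bs_opp \<alpha> e] u2" and
      wB: "bs_walk m n \<alpha> W u2 Ql w"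
      unfolding es walk_app by blast
    have eE: "e \<in> bs_E m n \<alpha>" using wE by (auto simp: walk_Cons)
    have "u2 = bs_tgt \<alpha> (bs_opp \<alpha> e)" "u1 = bs_src \<alpha> e" using wE by (auto simp: walk_Cons walk_Nil)
    then have "u2 = u1" using eE by (simp add: tgt_opp)
    then have w': "bs_walk m n \<alpha> W v (Pl @ Ql) w" using wA wB by (auto simp: walk_app)
    have "length (Pl @ Ql) < length es" using es by simp
    then obtain es' where es': "bs_walk m n \<alpha> W v es' w" "reduced \<alpha> es'"
      "scount \<alpha> e0 es' = scount \<alpha> e0 (Pl @ Ql)"
      using less.hyps[OF _ w' less.prems(2)] by blast
    have h1: "(bs_opp \<alpha> e = e0) = (e = bs_opp \<alpha> e0)" using opp_eq_iff[OF eE less.prems(2)] .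
    have h2: "(e = e0) = (bs_opp \<alpha> e = bs_opp \<alpha> e0)" using opp_opp[OF eE] opp_opp[OF less.prems(2)] by metis
    have "scount \<alpha> e0 [e, bs_opp \<alpha> e] = 0"
      unfolding scount_def using h1 h2 by (cases "e = e0"; cases "e = bs_opp \<alpha> e0") auto
    moreover have "scount \<alpha> e0 es = scount \<alpha> e0 Pl + scount \<alpha> e0 [e, bs_opp \<alpha> e] + scount \<alpha> e0 Ql"
      unfolding es by (simp only: scount_app add.assoc)
    ultimately have "scount \<alpha> e0 es = scount \<alpha> e0 (Pl @ Ql)" by (simp add: scount_app)
    then show ?thesis using es' by auto
  qed
qed

lemma forest_scount:
  assumes "is_forest m n \<alpha> W" "bs_walk m n \<alpha> W v es v" "e0 \<in> bs_E m n \<alpha>"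
  shows "scount \<alpha> e0 es = 0"
proof (rule ccontr)
  assume ne: "scount \<alpha> e0 es \<noteq> 0"
  obtain es' where es': "bs_walk m n \<alpha> W v es' v" "reduced \<alpha> es'" "scount \<alpha> e0 es' = scount \<alpha> e0 es"
    using reduce_walk[OF assms(2,3)] by blast
  then have "es' \<noteq> []" using ne by auto
  then show False using assms(1) es' by (auto simp: is_forest_def)
qed

end


locale mfs = spa \<alpha> m n for \<alpha> :: "'a preact" and m n +
  fixes \<alpha>0 :: "'a preact"
  assumes pa0: "pre_action m n \<alpha>0"
  and ext: "extends \<alpha> \<alpha>0"
  and Eold: "{e \<in> bs_E m n \<alpha>. bs_src \<alpha> e \<in> bs_V \<alpha>0 \<and> bs_tgt \<alpha> e \<in> bs_V \<alpha>0} = bs_E m n \<alpha>0"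
  and forest: "is_forest m n \<alpha> (bs_V \<alpha> - bs_V \<alpha>0)"
  and attach: "\<forall>v \<in> bs_V \<alpha> - bs_V \<alpha>0. \<exists>!e. e \<in> bs_E m n \<alpha> \<and> bs_src \<alpha> e \<in> bs_V \<alpha>0
                 \<and> bs_tgt \<alpha> e \<in> component m n \<alpha> (bs_V \<alpha> - bs_V \<alpha>0) v"
  and labels: "\<forall>e \<in> bs_E m n \<alpha>. bs_tgt \<alpha> e \<in> bs_V \<alpha> - bs_V \<alpha>0
            \<and> dist_to m n \<alpha> (bs_V \<alpha>0) (bs_src \<alpha> e) < dist_to m n \<alpha> (bs_V \<alpha>0) (bs_tgt \<alpha> e)
            \<longrightarrow> lab (bs_tgt \<alpha> e) = child_lab m n (fst e) (lab (bs_src \<alpha> e))"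

sublocale mfs \<subseteq> o: bijb \<alpha>0
  using pa0 by unfold_locales (simp add: pre_action_def)

context mfs begin

abbreviation "C0 \<equiv> carrier \<alpha>0"
abbreviation "VV \<equiv> bs_V \<alpha>"
abbreviation "V0 \<equiv> bs_V \<alpha>0"
abbreviation "NN \<equiv> bs_V \<alpha> - bs_V \<alpha>0"
abbreviation "EE \<equiv> bs_E m n \<alpha>"
abbreviation "D \<equiv> dist_to m n \<alpha> (bs_V \<alpha>0)"
abbreviation "walk \<equiv> bs_walk m n \<alpha>"

lemma C0_sub: "C0 \<subseteq> C" using ext by (simp add: extends_def)
lemma f0: "x \<in> C0 \<Longrightarrow> f x = bmap \<alpha>0 x" using ext by (simp add: extends_def)
lemma tmap0: "tmap \<alpha>0 x = Some y \<Longrightarrow> tmap \<alpha> x = Some y"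
  using ext by (auto simp: extends_def map_le_def dom_def)

lemma g0: assumes x: "x \<in> C0" shows "g x = o.g x"
proof -
  have "o.g x \<in> C0" "bmap \<alpha>0 (o.g x) = x" using x o.g_in o.fg by auto
  then have "f (o.g x) = x" "o.g x \<in> C" using f0 C0_sub by auto
  then show ?thesis using gf by metis
qed

lemma bp0: assumes x: "x \<in> C0" shows "bp \<alpha> k x = bp \<alpha>0 k x"
proof (induction k rule: int_induct[where k=0])
  case base then show ?case by simp
next
  case (step1 i)
  have "bp \<alpha> (i+1) x = f (bp \<alpha> i x)" using x C0_sub bp_succ by auto
  also have "\<dots> = bmap \<alpha>0 (bp \<alpha>0 i x)" using step1 f0 o.bp_in x by simp
  also have "\<dots> = bp \<alpha>0 (i+1) x" using o.bp_succ x by simp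
  finally show ?case .
next
  case (step2 i)
  have "bp \<alpha> (i-1) x = g (bp \<alpha> i x)" using x C0_sub bp_pred by auto
  also have "\<dots> = o.g (bp \<alpha>0 i x)" using step2 g0 o.bp_in x by simp
  also have "\<dots> = bp \<alpha>0 (i-1) x" using o.bp_pred x by simp
  finally show ?case .
qed

lemma bp0_in: "x \<in> C0 \<Longrightarrow> bp \<alpha> k x \<in> C0"
  using bp0 o.bp_in by simp

lemma orb0: "x \<in> C0 \<Longrightarrow> orb \<alpha> k x = orb \<alpha>0 k x"
  using bp0 by (simp add: orb_def)

lemma V0_sub: "V0 \<subseteq> VV"
proof
  fix v assume "v \<in> V0"
  then obtain x where x: "x \<in> C0" "v = orb \<alpha>0 1 x" by (auto simp: bs_V_def)
  then have "v = V x" "x \<in> C" using orb0 C0_sub by auto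
  then show "v \<in> VV" by (simp add: bs_V_def)
qed

lemma V_old: assumes x: "x \<in> C" shows "V x \<in> V0 \<longleftrightarrow> x \<in> C0"
proof
  assume "V x \<in> V0"
  then obtain y where y: "y \<in> C0" "V x = orb \<alpha>0 1 y" by (auto simp: bs_V_def)
  then have "x \<in> orb \<alpha> 1 y" using orb_self[of x 1] orb0 by simp
  then show "x \<in> C0" using y bp0_in by (auto simp: orb_def)
next
  assume "x \<in> C0"
  then show "V x \<in> V0" using orb0 by (simp add: bs_V_def)
qed

lemma NN_iff: "x \<in> C \<Longrightarrow> V x \<in> NN \<longleftrightarrow> x \<notin> C0"
  using V_old V_in by auto

lemma comp_walk: "walk NN v es w \<Longrightarrow> w \<in> component m n \<alpha> NN v"
  by (auto simp: component_def)

lemma attach_unique: "v \<in> NN \<Longrightarrow> e1 \<in> EE \<Longrightarrow> bs_src \<alpha> e1 \<in> V0 \<Longrightarrow> bs_tgt \<alpha> e1 \<in> component m n \<alpha> NN v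
  \<Longrightarrow> e2 \<in> EE \<Longrightarrow> bs_src \<alpha> e2 \<in> V0 \<Longrightarrow> bs_tgt \<alpha> e2 \<in> component m n \<alpha> NN v \<Longrightarrow> e1 = e2"
  using attach by blast

lemma conn: assumes v: "v \<in> VV" shows "\<exists>es w. walk VV v es w \<and> w \<in> V0"
proof (cases "v \<in> V0")
  case True then show ?thesis using v by (intro exI[of _ "[]"]) (auto simp: walk_Nil)
next
  case False
  then have vN: "v \<in> NN" using v by simp
  then obtain e0 where e0: "e0 \<in> EE" "bs_src \<alpha> e0 \<in> V0" "bs_tgt \<alpha> e0 \<in> component m n \<alpha> NN v"
    using attach by blast
  then obtain es where es: "walk NN v es (bs_tgt \<alpha> e0)" by (auto simp: component_def)
  have "walk VV (bs_tgt \<alpha> e0) [bs_opp \<alpha> e0] (bs_src \<alpha> e0)"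
    using e0 tgt_V opp_E tgt_opp V0_sub by (auto simp: walk_single bs_tgt_def)
  moreover have "walk VV v es (bs_tgt \<alpha> e0)" using walk_mono[OF es] by auto
  ultimately have "walk VV v (es @ [bs_opp \<alpha> e0]) (bs_src \<alpha> e0)" by (auto simp: walk_app)
  then show ?thesis using e0 by blast
qed

lemma D_geo: assumes v: "v \<in> VV" shows "\<exists>es w. walk VV v es w \<and> w \<in> V0 \<and> length es = D v"
proof -
  let ?P = "\<lambda>k. \<exists>es w. walk VV v es w \<and> w \<in> V0 \<and> length es = k"
  obtain es w where "walk VV v es w" "w \<in> V0" using conn[OF v] by blast
  then have "?P (length es)" by blast
  then have "?P (LEAST k. ?P k)" by (rule LeastI)
  then show ?thesis by (simp add: dist_to_def)
qed

lemma D_le: "walk VV v es w \<Longrightarrow> w \<in> V0 \<Longrightarrow> D v \<le> length es"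
  unfolding dist_to_def by (rule Least_le) blast

lemma D_V0: "v \<in> V0 \<Longrightarrow> D v = 0"
  using D_le[of v "[]" v] V0_sub by (auto simp: walk_Nil)

lemma D_zero: assumes "v \<in> VV" "D v = 0" shows "v \<in> V0"
proof -
  obtain es w where "walk VV v es w" "w \<in> V0" "length es = D v" using D_geo assms(1) by blast
  then show ?thesis using assms(2) by (auto simp: walk_Nil)
qed

lemma D_pos: "v \<in> NN \<Longrightarrow> D v > 0"
  using D_zero by auto

lemma D_edge: assumes e: "e \<in> EE" shows "D (bs_src \<alpha> e) \<le> D (bs_tgt \<alpha> e) + 1"
proof -
  obtain es w where g: "walk VV (bs_tgt \<alpha> e) es w" "w \<in> V0" "length es = D (bs_tgt \<alpha> e)"
    using D_geo tgt_V[OF e] by blast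
  then have "walk VV (bs_src \<alpha> e) (e # es) w" using e src_V by (simp add: walk_Cons)
  then show ?thesis using D_le g by fastforce
qed

lemma geo_edges: "walk VV v es w \<Longrightarrow> w \<in> V0 \<Longrightarrow> length es = D v \<Longrightarrow> \<forall>e\<in>set es. D (bs_tgt \<alpha> e) < D v"
proof (induction es arbitrary: v)
  case Nil then show ?case by simp
next
  case (Cons e es)
  then have e: "e \<in> EE" "bs_src \<alpha> e = v" and w: "walk VV (bs_tgt \<alpha> e) es w" by (auto simp: walk_Cons)
  have "D (bs_tgt \<alpha> e) \<le> length es" using D_le[OF w Cons.prems(2)] .
  moreover have "D v \<le> D (bs_tgt \<alpha> e) + 1" using D_edge[OF e(1)] e(2) by simp
  ultimately have eq: "length es = D (bs_tgt \<alpha> e)" and lt: "D (bs_tgt \<alpha> e) < D v" using Cons.prems(3) by auto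
  have "\<forall>e'\<in>set es. D (bs_tgt \<alpha> e') < D (bs_tgt \<alpha> e)" using Cons.IH[OF w Cons.prems(2) eq] .
  then show ?case using lt by auto
qed

lemma first_exit: "walk VV v es w \<Longrightarrow> v \<in> NN \<Longrightarrow> w \<in> V0 \<Longrightarrow>
  \<exists>es' fe. walk NN v es' (bs_src \<alpha> fe) \<and> fe \<in> EE \<and> bs_tgt \<alpha> fe \<in> V0 \<and> set es' \<subseteq> set es"
proof (induction es arbitrary: v)
  case Nil then show ?case by (auto simp: walk_Nil)
next
  case (Cons e es)
  then have e: "e \<in> EE" "bs_src \<alpha> e = v" and w: "walk VV (bs_tgt \<alpha> e) es w" by (auto simp: walk_Cons)
  show ?case
  proof (cases "bs_tgt \<alpha> e \<in> V0")
    case True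
    then show ?thesis using e Cons.prems(2) by (intro exI[of _ "[]"] exI[of _ e]) (auto simp: walk_Nil)
  next
    case False
    then have "bs_tgt \<alpha> e \<in> NN" using tgt_V[OF e(1)] by simp
    then obtain es' fe where h: "walk NN (bs_tgt \<alpha> e) es' (bs_src \<alpha> fe)" "fe \<in> EE" "bs_tgt \<alpha> fe \<in> V0" "set es' \<subseteq> set es"
      using Cons.IH[OF w _ Cons.prems(3)] by blast
    then have "walk NN v (e # es') (bs_src \<alpha> fe)" using e Cons.prems(2) by (simp add: walk_Cons)
    then show ?thesis using h by (intro exI[of _ "e # es'"] exI[of _ fe]) auto
  qed
qed

lemma exit_geo: assumes a: "a \<in> NN"
  shows "\<exists>es fe. walk NN a es (bs_src \<alpha> fe) \<and> fe \<in> EE \<and> bs_tgt \<alpha> fe \<in> V0 \<and> (\<forall>e\<in>set es. D (bs_tgt \<alpha> e) < D a)"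
proof -
  obtain es w where g: "walk VV a es w" "w \<in> V0" "length es = D a" using D_geo a by blast
  have ge: "\<forall>e\<in>set es. D (bs_tgt \<alpha> e) < D a" using geo_edges[OF g] .
  obtain es' fe where "walk NN a es' (bs_src \<alpha> fe)" "fe \<in> EE" "bs_tgt \<alpha> fe \<in> V0" "set es' \<subseteq> set es"
    using first_exit[OF g(1) a g(2)] by blast
  then show ?thesis using ge by blast
qed

lemma same_root:
  assumes b: "b \<in> NN" and P: "walk NN b P a"
  and ea: "walk NN a esa (bs_src \<alpha> fa)" "fa \<in> EE" "bs_tgt \<alpha> fa \<in> V0"
  and eb: "walk NN b esb (bs_src \<alpha> fb)" "fb \<in> EE" "bs_tgt \<alpha> fb \<in> V0"
  shows "bs_src \<alpha> fa = bs_src \<alpha> fb"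
proof -
  have "walk NN b (P @ esa) (bs_src \<alpha> fa)" using P ea(1) by (auto simp: walk_app)
  then have ca: "bs_tgt \<alpha> (bs_opp \<alpha> fa) \<in> component m n \<alpha> NN b"
    using tgt_opp[OF ea(2)] comp_walk by simp
  have cb: "bs_tgt \<alpha> (bs_opp \<alpha> fb) \<in> component m n \<alpha> NN b"
    using tgt_opp[OF eb(2)] comp_walk eb(1) by simp
  have sa: "bs_src \<alpha> (bs_opp \<alpha> fa) \<in> V0" using ea(3) by (simp add: bs_tgt_def)
  have sb: "bs_src \<alpha> (bs_opp \<alpha> fb) \<in> V0" using eb(3) by (simp add: bs_tgt_def)
  have "bs_opp \<alpha> fa = bs_opp \<alpha> fb"
    by (rule attach_unique[OF b opp_E[OF ea(2)] sa ca opp_E[OF eb(2)] sb cb])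
  then have "bs_tgt \<alpha> (bs_opp \<alpha> fa) = bs_tgt \<alpha> (bs_opp \<alpha> fb)" by simp
  then show ?thesis using tgt_opp[OF ea(2)] tgt_opp[OF eb(2)] by simp
qed

lemma scount_none: "(\<forall>x\<in>set xs. x \<noteq> e0 \<and> x \<noteq> bs_opp \<alpha> e0) \<Longrightarrow> scount \<alpha> e0 xs = 0"
proof -
  assume h: "\<forall>x\<in>set xs. x \<noteq> e0 \<and> x \<noteq> bs_opp \<alpha> e0"
  then have "e0 \<notin> set xs" "bs_opp \<alpha> e0 \<notin> set xs" by auto
  then show ?thesis by (simp add: scount_def)
qed

lemma scount_opp: "scount \<alpha> e0 [bs_opp \<alpha> e0] = -1"
  using opp_ne[of e0] by (simp add: scount_def)

lemma G1: assumes e: "e \<in> EE" and b: "bs_tgt \<alpha> e \<in> NN"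
  shows "D (bs_src \<alpha> e) \<noteq> D (bs_tgt \<alpha> e)"
proof
  assume eq: "D (bs_src \<alpha> e) = D (bs_tgt \<alpha> e)"
  define a where "a = bs_src \<alpha> e"
  define bb where "bb = bs_tgt \<alpha> e"
  have "D bb > 0" using D_pos b by (simp add: bb_def)
  then have "a \<notin> V0" using D_V0 eq by (auto simp: a_def bb_def)
  then have aN: "a \<in> NN" using src_V[OF e] by (simp add: a_def)
  have bN: "bb \<in> NN" using b by (simp add: bb_def)
  obtain ga fa where ga: "walk NN a ga (bs_src \<alpha> fa)" "fa \<in> EE" "bs_tgt \<alpha> fa \<in> V0"
    "\<forall>x\<in>set ga. D (bs_tgt \<alpha> x) < D a" using exit_geo[OF aN] by blast
  obtain gb fb where gb: "walk NN bb gb (bs_src \<alpha> fb)" "fb \<in> EE" "bs_tgt \<alpha> fb \<in> V0"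
    "\<forall>x\<in>set gb. D (bs_tgt \<alpha> x) < D bb" using exit_geo[OF bN] by blast
  have P: "walk NN bb [bs_opp \<alpha> e] a"
    using e opp_E tgt_opp aN bN by (simp add: walk_single a_def bb_def bs_tgt_def)
  have r: "bs_src \<alpha> fa = bs_src \<alpha> fb" using same_root[OF bN P ga(1-3) gb(1-3)] .
  have cl: "walk NN bb ([bs_opp \<alpha> e] @ ga @ revw \<alpha> gb) bb"
    unfolding walk_app using P ga(1) walk_rev[OF gb(1)] r by auto
  have "scount \<alpha> e ([bs_opp \<alpha> e] @ ga @ revw \<alpha> gb) = 0"
    using forest_scount[OF forest cl e] .
  moreover have "scount \<alpha> e ga = 0"
  proof (rule scount_none, intro ballI conjI)
    fix x assume x: "x \<in> set ga"
    then show "x \<noteq> e" using ga(4) eq by (auto simp: a_def)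
    show "x \<noteq> bs_opp \<alpha> e" using ga(4) x tgt_opp[OF e] by (auto simp: a_def)
  qed
  moreover have "scount \<alpha> e (revw \<alpha> gb) = 0"
  proof (rule scount_none, intro ballI conjI)
    fix x assume x: "x \<in> set (revw \<alpha> gb)"
    then obtain y where y: "y \<in> set gb" "x = bs_opp \<alpha> y" by (auto simp: revw_set)
    have yE: "y \<in> EE" using walk_edges[OF gb(1)] y by auto
    show "x \<noteq> e"
    proof
      assume "x = e"
      then have "y = bs_opp \<alpha> e" using opp_eq_iff[OF yE e] y by simp
      then show False using gb(4) y tgt_opp[OF e] eq by (auto simp: a_def bb_def)
    qed
    show "x \<noteq> bs_opp \<alpha> e"
    proof
      assume "x = bs_opp \<alpha> e"
      then have "y = e" using y opp_opp[OF yE] opp_opp[OF e] by metis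
      then show False using gb(4) y by (auto simp: bb_def)
    qed
  qed
  moreover have "scount \<alpha> e ([bs_opp \<alpha> e] @ ga @ revw \<alpha> gb) = scount \<alpha> e [bs_opp \<alpha> e] + scount \<alpha> e ga + scount \<alpha> e (revw \<alpha> gb)"
    by (simp only: scount_app add.assoc)
  ultimately show False using scount_opp[of e] by simp
qed

lemma G3: assumes e1: "e1 \<in> EE" and e2: "e2 \<in> EE" and t: "bs_tgt \<alpha> e1 = bs_tgt \<alpha> e2"
  and vN: "bs_tgt \<alpha> e1 \<in> NN"
  and l1: "D (bs_src \<alpha> e1) < D (bs_tgt \<alpha> e1)" and l2: "D (bs_src \<alpha> e2) < D (bs_tgt \<alpha> e2)"
  shows "e1 = e2"
proof (rule ccontr)
  assume ne: "e1 \<noteq> e2"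
  define v where "v = bs_tgt \<alpha> e1"
  define u1 where "u1 = bs_src \<alpha> e1"
  define u2 where "u2 = bs_src \<alpha> e2"
  have sv1: "bs_src \<alpha> (bs_opp \<alpha> e1) = v" by (simp add: bs_tgt_def v_def)
  have sv2: "bs_src \<alpha> (bs_opp \<alpha> e2) = v" using t by (simp add: bs_tgt_def v_def)
  have d1: "D u1 + 1 = D v" using D_edge[OF opp_E[OF e1]] tgt_opp[OF e1] l1 sv1
    by (simp add: u1_def v_def)
  have d2: "D u2 + 1 = D v" using D_edge[OF opp_E[OF e2]] tgt_opp[OF e2] l2 sv2 t
    by (simp add: u2_def v_def)
  have vN: "v \<in> NN" using vN by (simp add: v_def)
  show False
  proof (cases "D u1 = 0")
    case True
    then have "D u2 = 0" using d1 d2 by simp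
    then have u: "u1 \<in> V0" "u2 \<in> V0" using True D_zero src_V e1 e2 by (auto simp: u1_def u2_def)
    have "v \<in> component m n \<alpha> NN v" using vN comp_walk[of v "[]" v] by (simp add: walk_Nil)
    then have "e1 = e2" using attach_unique[OF vN e1 _ _ e2] u t by (simp add: u1_def u2_def v_def)
    then show False using ne by simp
  next
    case False
    then have u1N: "u1 \<in> NN" and u2N: "u2 \<in> NN"
      using D_V0 src_V e1 e2 d1 d2 by (auto simp: u1_def u2_def)
    obtain g1 f1 where g1: "walk NN u1 g1 (bs_src \<alpha> f1)" "f1 \<in> EE" "bs_tgt \<alpha> f1 \<in> V0"
      "\<forall>x\<in>set g1. D (bs_tgt \<alpha> x) < D u1" using exit_geo[OF u1N] by blast
    obtain g2 f2 where g2: "walk NN u2 g2 (bs_src \<alpha> f2)" "f2 \<in> EE" "bs_tgt \<alpha> f2 \<in> V0"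
      "\<forall>x\<in>set g2. D (bs_tgt \<alpha> x) < D u2" using exit_geo[OF u2N] by blast
    have w1: "walk NN v [bs_opp \<alpha> e1] u1"
      using e1 opp_E tgt_opp u1N vN sv1 by (simp add: walk_single u1_def)
    have w2: "walk NN u2 [e2] v"
      using e2 u2N vN t by (simp add: walk_single u2_def v_def)
    have P: "walk NN u2 ([e2] @ [bs_opp \<alpha> e1]) u1"
      unfolding walk_app using w1 w2 by blast
    have r: "bs_src \<alpha> f1 = bs_src \<alpha> f2" using same_root[OF u2N P g1(1-3) g2(1-3)] .
    have cl: "walk NN v ([bs_opp \<alpha> e1] @ g1 @ revw \<alpha> g2 @ [e2]) v"
      unfolding walk_app using w1 g1(1) walk_rev[OF g2(1)] w2 r by auto
    have "scount \<alpha> e1 ([bs_opp \<alpha> e1] @ g1 @ revw \<alpha> g2 @ [e2]) = 0"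
      using forest_scount[OF forest cl e1] .
    moreover have "scount \<alpha> e1 g1 = 0"
    proof (rule scount_none, intro ballI conjI)
      fix x assume x: "x \<in> set g1"
      then show "x \<noteq> e1" using g1(4) d1 by (auto simp: v_def)
      show "x \<noteq> bs_opp \<alpha> e1" using g1(4) x tgt_opp[OF e1] by (auto simp: u1_def)
    qed
    moreover have "scount \<alpha> e1 (revw \<alpha> g2) = 0"
    proof (rule scount_none, intro ballI conjI)
      fix x assume x: "x \<in> set (revw \<alpha> g2)"
      then obtain y where y: "y \<in> set g2" "x = bs_opp \<alpha> y" by (auto simp: revw_set)
      have yE: "y \<in> EE" using walk_edges[OF g2(1)] y by auto
      show "x \<noteq> e1"
      proof
        assume "x = e1"
        then have "y = bs_opp \<alpha> e1" using opp_eq_iff[OF yE e1] y by simp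
        then show False using g2(4) y tgt_opp[OF e1] d1 d2 by (auto simp: u1_def)
      qed
      show "x \<noteq> bs_opp \<alpha> e1"
      proof
        assume "x = bs_opp \<alpha> e1"
        then have "y = e1" using y opp_opp[OF yE] opp_opp[OF e1] by metis
        then show False using g2(4) y d2 by (auto simp: v_def)
      qed
    qed
    moreover have "scount \<alpha> e1 [e2] = 0"
    proof (rule scount_none, intro ballI conjI)
      fix x assume "x \<in> set [e2]"
      then have x: "x = e2" by simp
      then show "x \<noteq> e1" using ne by simp
      show "x \<noteq> bs_opp \<alpha> e1"
      proof
        assume "x = bs_opp \<alpha> e1"
        then have "bs_tgt \<alpha> e2 = u1" using x tgt_opp[OF e1] by (simp add: u1_def)
        then show False using t d1 by (simp add: v_def)
      qed
    qed
    moreover have "scount \<alpha> e1 ([bs_opp \<alpha> e1] @ g1 @ revw \<alpha> g2 @ [e2]) =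
        scount \<alpha> e1 [bs_opp \<alpha> e1] + scount \<alpha> e1 g1 + scount \<alpha> e1 (revw \<alpha> g2) + scount \<alpha> e1 [e2]"
      by (simp only: scount_app add.assoc)
    ultimately show False using scount_opp[of e1] by simp
  qed
qed

end


context bijb begin
lemma bp_inv_prop:
  assumes h: "\<forall>x\<in>C. P x \<longleftrightarrow> P (bp \<alpha> k x)" and x: "x \<in> C"
  shows "P x \<longleftrightarrow> P (bp \<alpha> (k*j) x)"
proof (induction j rule: int_induct[where k=0])
  case base then show ?case by simp
next
  case (step1 i)
  have "bp \<alpha> (k*(i+1)) x = bp \<alpha> k (bp \<alpha> (k*i) x)" using bp_add[OF x, of k "k*i"] by (simp add: algebra_simps)
  then show ?case using step1 h bp_in x by simp
next
  case (step2 i)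
  have "bp \<alpha> k (bp \<alpha> (k*(i-1)) x) = bp \<alpha> (k*i) x" using bp_add[OF x, of k "k*(i-1)"] by (simp add: algebra_simps)
  then show ?case using step2 h bp_in x by metis
qed
end

context mfs begin

lemma dom0_sub: "dom (tmap \<alpha>0) \<subseteq> C0" using pa0 by (simp add: pre_action_def)
lemma ran0_sub: "ran (tmap \<alpha>0) \<subseteq> C0" using pa0 by (simp add: pre_action_def)

lemma dom0_inv: "x \<in> dom (tmap \<alpha>0) \<Longrightarrow> bp \<alpha>0 (n*j) x \<in> dom (tmap \<alpha>0)"
  using o.bp_inv_prop[of "\<lambda>x. x \<in> dom (tmap \<alpha>0)" n x j] pa0 dom0_sub by (auto simp: pre_action_def)

lemma ran0_inv: "x \<in> ran (tmap \<alpha>0) \<Longrightarrow> bp \<alpha>0 (m*j) x \<in> ran (tmap \<alpha>0)"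
  using o.bp_inv_prop[of "\<lambda>x. x \<in> ran (tmap \<alpha>0)" m x j] pa0 ran0_sub by (auto simp: pre_action_def)

lemma old_tstep:
  assumes q: "q \<in> C0" and q': "step \<alpha> q (T, b) \<in> C0"
  shows "if b then tmap \<alpha>0 q = Some (tau \<alpha> q) else tmap \<alpha>0 (tinv \<alpha> q) = Some q"
proof -
  have qC: "q \<in> C" using q C0_sub by auto
  have "tedge q b \<in> EE" "bs_src \<alpha> (tedge q b) \<in> V0" "bs_tgt \<alpha> (tedge q b) \<in> V0"
    using tedge_E[OF qC] tedge_src[OF qC] tedge_tgt[OF qC] V_old qC q q' step_in by auto
  then have E0: "tedge q b \<in> bs_E m n \<alpha>0" using Eold by blast
  show ?thesis
  proof (cases b)
    case True
    then obtain x where x: "x \<in> dom (tmap \<alpha>0)" "orb \<alpha>0 n x = orb \<alpha> n q"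
      using E0 by (auto simp: bs_E_def tedge_def)
    have xC0: "x \<in> C0" using x dom0_sub by auto
    have "q \<in> orb \<alpha> n x" using x(2) orb0[OF xC0] orb_self[of q n] by simp
    then obtain j where "q = bp \<alpha> (n*j) x" by (auto simp: orb_def)
    then have "q = bp \<alpha>0 (n*j) x" using bp0 xC0 by simp
    then have "q \<in> dom (tmap \<alpha>0)" using dom0_inv x(1) by simp
    then obtain z where z: "tmap \<alpha>0 q = Some z" by auto
    then have "tmap \<alpha> q = Some z" by (rule tmap0)
    then have "z = tau \<alpha> q" using tau_Some[OF qC] by simp
    then show ?thesis using z True by simp
  next
    case False
    then obtain x where x: "x \<in> ran (tmap \<alpha>0)" "orb \<alpha>0 m x = orb \<alpha> m q"
      using E0 by (auto simp: bs_E_def tedge_def)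
    have xC0: "x \<in> C0" using x ran0_sub by auto
    have "q \<in> orb \<alpha> m x" using x(2) orb0[OF xC0] orb_self[of q m] by simp
    then obtain j where "q = bp \<alpha> (m*j) x" by (auto simp: orb_def)
    then have "q = bp \<alpha>0 (m*j) x" using bp0 xC0 by simp
    then have "q \<in> ran (tmap \<alpha>0)" using ran0_inv x(1) by simp
    then obtain z where z: "tmap \<alpha>0 z = Some q" by (auto simp: ran_def)
    then have "tmap \<alpha> z = Some q" by (rule tmap0)
    then have "z = tinv \<alpha> q" using tinv_eq by simp
    then show ?thesis using z False by simp
  qed
qed

lemma old_path: "x \<in> C0 \<Longrightarrow> (\<forall>i\<le>length w. act \<alpha> x (take i w) \<in> C0) \<Longrightarrow> sch_path \<alpha>0 x w (act \<alpha> x w)"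
proof (induction w arbitrary: x)
  case Nil then show ?case by (auto intro: sch_path.nil)
next
  case (Cons s w)
  have x: "x \<in> C0" by fact
  have s': "step \<alpha> x s \<in> C0" using Cons.prems(2)[rule_format, of 1] by simp
  have rest: "\<forall>i\<le>length w. act \<alpha> (step \<alpha> x s) (take i w) \<in> C0"
  proof (intro allI impI)
    fix i assume "i \<le> length w"
    then have "Suc i \<le> length (s # w)" by simp
    then have "act \<alpha> x (take (Suc i) (s # w)) \<in> C0" using Cons.prems(2) by blast
    then show "act \<alpha> (step \<alpha> x s) (take i w) \<in> C0" by simp
  qed
  have IH: "sch_path \<alpha>0 (step \<alpha> x s) w (act \<alpha> x (s # w))" using Cons.IH[OF s' rest] by simp
  obtain gg b where s: "s = (gg, b)" by (cases s)
  show ?case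
  proof (cases gg)
    case B
    show ?thesis
    proof (cases b)
      case True then show ?thesis using IH x s B f0 by (auto intro: sch_path.b_fwd)
    next
      case False then show ?thesis using IH x s B g0 by (auto intro: sch_path.b_bwd)
    qed
  next
    case T
    note ot = old_tstep[OF x, of b]
    show ?thesis
    proof (cases b)
      case True then show ?thesis using IH x s T s' ot by (auto intro: sch_path.t_fwd)
    next
      case False then show ?thesis using IH x s T s' ot by (auto intro: sch_path.t_bwd)
    qed
  qed
qed

lemma sub_path: "sch_path \<alpha>0 x w y \<Longrightarrow> sch_path \<alpha> x w y"
proof (induction rule: sch_path.induct)
  case (nil x) then show ?case using C0_sub by (auto intro: sch_path.nil)
next
  case (b_fwd x w y) then show ?case using C0_sub f0 by (auto intro: sch_path.b_fwd)
next
  case (b_bwd x w y) then show ?case using C0_sub g0 by (auto intro: sch_path.b_bwd)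
next
  case (t_fwd x z w y) then show ?case using tmap0 by (auto intro: sch_path.t_fwd)
next
  case (t_bwd z x w y) then show ?case using tmap0 by (auto intro: sch_path.t_bwd)
qed

lemma label_dvd:
  assumes e1: "e1 \<in> EE" and t: "bs_tgt \<alpha> e1 = V y" and yN: "V y \<in> NN" and y: "y \<in> C"
  and l: "D (bs_src \<alpha> e1) < D (bs_tgt \<alpha> e1)"
  and k: "k = (if fst e1 then m else n)"
  and eq: "bp \<alpha> j y = bp \<alpha> (k*i) y"
  shows "k dvd j"
proof -
  have lab: "lab (V y) = child_lab m n (fst e1) (lab (bs_src \<alpha> e1))"
    using labels e1 t yN l by auto
  have fix1: "bp \<alpha> (j - k*i) y = y" using bp_diff_fix[OF y eq] .
  show ?thesis
  proof (cases "finite (V y)")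
    case False
    then have "j - k*i = 0" using infinite_free[OF y False fix1] by simp
    then show ?thesis by (metis dvd_triv_left eq_iff_diff_eq_0)
  next
    case True
    have cd: "int (card (V y)) dvd (j - k*i)" using finite_period[OF y True fix1] .
    have "lab (V y) = enat (card (V y))" using True by (simp add: lab_def)
    then obtain l where lsrc: "lab (bs_src \<alpha> e1) = enat l"
      and c: "card (V y) = (if fst e1 then nat \<bar>m\<bar> * l div gcd l (nat \<bar>n\<bar>) else nat \<bar>n\<bar> * l div gcd l (nat \<bar>m\<bar>))"
      using lab by (cases "lab (bs_src \<alpha> e1)") (auto simp: child_lab_def)
    have "nat \<bar>k\<bar> dvd card (V y)"
    proof (cases "fst e1")
      case True
      have "nat \<bar>m\<bar> * l div gcd l (nat \<bar>n\<bar>) = nat \<bar>m\<bar> * (l div gcd l (nat \<bar>n\<bar>))"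
        by (rule div_mult_swap[OF gcd_dvd1, symmetric])
      then show ?thesis using c True k by simp
    next
      case False
      have "nat \<bar>n\<bar> * l div gcd l (nat \<bar>m\<bar>) = nat \<bar>n\<bar> * (l div gcd l (nat \<bar>m\<bar>))"
        by (rule div_mult_swap[OF gcd_dvd1, symmetric])
      then show ?thesis using c False k by simp
    qed
    then have "k dvd int (card (V y))"
      by (metis abs_dvd_iff int_dvd_int_iff int_nat_eq abs_ge_zero)
    then have "k dvd (j - k*i)" using cd dvd_trans by blast
    then show ?thesis by (metis dvd_add dvd_triv_left diff_add_cancel)
  qed
qed

end


definition tc :: "word \<Rightarrow> nat" where "tc w = length (filter (\<lambda>s. fst s = T) w)"

lemma tc_Nil[simp]: "tc [] = 0" by (simp add: tc_def)
lemma tc_app[simp]: "tc (u @ v) = tc u + tc v" by (simp add: tc_def)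
lemma tc_Cons[simp]: "tc (s # w) = (if fst s = T then 1 else 0) + tc w" by (simp add: tc_def)
lemma tc_bpow[simp]: "tc (bpow k) = 0" by (simp add: tc_def bpow_def)
lemma tc_bw: "\<forall>s\<in>set bw. fst s = B \<Longrightarrow> tc bw = 0"
  by (induction bw) auto

context mfs begin

definition dp :: "'a \<Rightarrow> nat" where "dp x = D (V x)"

fun mxd :: "'a \<Rightarrow> word \<Rightarrow> nat" where
  "mxd x [] = dp x"
| "mxd x (s # w) = max (dp x) (mxd (step \<alpha> x s) w)"

lemma mxd_ge: "i \<le> length w \<Longrightarrow> dp (act \<alpha> x (take i w)) \<le> mxd x w"
proof (induction w arbitrary: x i)
  case Nil then show ?case by simp
next
  case (Cons s w)
  show ?case
  proof (cases i)
    case 0 then show ?thesis by simp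
  next
    case (Suc j)
    then have "dp (act \<alpha> (step \<alpha> x s) (take j w)) \<le> mxd (step \<alpha> x s) w" using Cons by simp
    then show ?thesis using Suc by simp
  qed
qed

lemma mxd_ge0: "dp x \<le> mxd x w"
  using mxd_ge[of 0 w x] by simp

lemma mxd_suffix: "mxd (act \<alpha> x u) v \<le> mxd x (u @ v)"
  by (induction u arbitrary: x) (simp_all add: le_max_iff_disj)

lemma V_bw: "y \<in> C \<Longrightarrow> \<forall>s\<in>set bw. fst s = B \<Longrightarrow> V (act \<alpha> y bw) = V y"
proof (induction bw arbitrary: y)
  case Nil then show ?case by simp
next
  case (Cons s bw)
  obtain b where s: "s = (B, b)" using Cons.prems(2) by (cases s) auto
  have "V (step \<alpha> y s) = V y" using V_stepB[OF Cons.prems(1)] s by simp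
  then show ?case using Cons step_in by simp
qed

lemma split1: "x \<in> C \<Longrightarrow> dp x < d \<Longrightarrow> mxd x w = d \<Longrightarrow>
  \<exists>a s1 r. w = a @ s1 # r \<and> fst s1 = T \<and> dp (act \<alpha> x a) < d \<and> dp (step \<alpha> (act \<alpha> x a) s1) = d"
proof (induction w arbitrary: x)
  case Nil then show ?case by simp
next
  case (Cons s w)
  have m: "mxd (step \<alpha> x s) w = d" using Cons.prems by (auto simp: max_def split: if_splits)
  show ?case
  proof (cases "dp (step \<alpha> x s) = d")
    case True
    have "fst s = T"
    proof (rule ccontr)
      assume "fst s \<noteq> T"
      then obtain b where "s = (B, b)" by (cases s) (metis gen.exhaust fst_conv)
      then have "dp (step \<alpha> x s) = dp x" using V_stepB[OF Cons.prems(1)] by (simp add: dp_def)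
      then show False using True Cons.prems(2) by simp
    qed
    then show ?thesis using True Cons.prems(2) by (intro exI[of _ "[]"] exI[of _ s] exI[of _ w]) auto
  next
    case False
    then have "dp (step \<alpha> x s) < d" using mxd_ge0[of "step \<alpha> x s" w] m by simp
    then obtain a s1 r where h: "w = a @ s1 # r" "fst s1 = T" "dp (act \<alpha> (step \<alpha> x s) a) < d"
      "dp (step \<alpha> (act \<alpha> (step \<alpha> x s) a) s1) = d"
      using Cons.IH[OF step_in[OF Cons.prems(1)] _ m] by blast
    then show ?thesis by (intro exI[of _ "s # a"] exI[of _ s1] exI[of _ r]) auto
  qed
qed

lemma split2: "y \<in> C \<Longrightarrow> V (act \<alpha> y r) \<noteq> V y \<Longrightarrow>
  \<exists>bw s2 c. r = bw @ s2 # c \<and> (\<forall>s\<in>set bw. fst s = B) \<and> fst s2 = T"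
proof (induction r arbitrary: y)
  case Nil then show ?case by simp
next
  case (Cons s r)
  show ?case
  proof (cases "fst s = T")
    case True then show ?thesis by (intro exI[of _ "[]"] exI[of _ s] exI[of _ r]) auto
  next
    case False
    then obtain b where sb: "s = (B, b)" by (cases s) (metis gen.exhaust fst_conv)
    then have "V (step \<alpha> y s) = V y" using V_stepB[OF Cons.prems(1)] by simp
    then have "V (act \<alpha> (step \<alpha> y s) r) \<noteq> V (step \<alpha> y s)" using Cons.prems(2) by simp
    then obtain bw s2 c where "r = bw @ s2 # c" "\<forall>s\<in>set bw. fst s = B" "fst s2 = T"
      using Cons.IH[OF step_in[OF Cons.prems(1)]] by blast
    then show ?thesis using sb by (intro exI[of _ "s # bw"] exI[of _ s2] exI[of _ c]) auto
  qed
qed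

lemma dp_old: "x \<in> C \<Longrightarrow> dp x = 0 \<longleftrightarrow> x \<in> C0"
  using D_V0 D_zero V_old V_in by (auto simp: dp_def)

lemma mxd0_path: "x \<in> C0 \<Longrightarrow> mxd x w = 0 \<Longrightarrow> sch_path \<alpha>0 x w (act \<alpha> x w)"
proof -
  assume x: "x \<in> C0" and m: "mxd x w = 0"
  have "\<forall>i\<le>length w. act \<alpha> x (take i w) \<in> C0"
  proof (intro allI impI)
    fix i assume "i \<le> length w"
    then have "dp (act \<alpha> x (take i w)) = 0" using mxd_ge[of i w x] m by simp
    then show "act \<alpha> x (take i w) \<in> C0" using dp_old act_in x C0_sub by auto
  qed
  then show ?thesis using old_path x by blast
qed

lemma reduce_step:
  assumes x: "x \<in> C0" and z: "act \<alpha> x w \<in> C0" and d: "mxd x w > 0"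
  shows "\<exists>w''. tc w'' < tc w \<and> bs_eq m n w w''"
proof -
  define d where "d = mxd x w"
  have xC: "x \<in> C" using x C0_sub by auto
  have dpx: "dp x < d" using dp_old[OF xC] x d by (simp add: d_def)
  obtain a s1 r where w: "w = a @ s1 # r" and s1: "fst s1 = T" and lp: "dp (act \<alpha> x a) < d"
    and ly: "dp (step \<alpha> (act \<alpha> x a) s1) = d"
    using split1[OF xC dpx] d_def by blast
  define p where "p = act \<alpha> x a"
  define y where "y = step \<alpha> p s1"
  have pC: "p \<in> C" and yC: "y \<in> C" using xC act_in step_in by (auto simp: p_def y_def)
  have yr: "act \<alpha> y r = act \<alpha> x w" by (simp add: w act_app p_def y_def)
  have dz: "dp (act \<alpha> y r) = 0" using yr z dp_old act_in xC by auto
  have dpos: "d > 0" using d by (simp add: d_def)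
  have "V (act \<alpha> y r) \<noteq> V y" using dz ly dpos by (auto simp: dp_def y_def p_def)
  then obtain bw s2 c where r: "r = bw @ s2 # c" and bwB: "\<forall>s\<in>set bw. fst s = B" and s2: "fst s2 = T"
    using split2[OF yC] by blast
  define y' where "y' = act \<alpha> y bw"
  define p' where "p' = step \<alpha> y' s2"
  have y'C: "y' \<in> C" and p'C: "p' \<in> C" using yC act_in step_in by (auto simp: y'_def p'_def)
  have Vy': "V y' = V y" using V_bw[OF yC bwB] by (simp add: y'_def)
  have w2: "w = (a @ s1 # bw @ [s2]) @ c" using w r by simp
  have pe: "p' = act \<alpha> x (a @ s1 # bw @ [s2])" by (simp add: act_app p'_def y'_def y_def p_def)
  have "dp p' \<le> mxd p' c" by (rule mxd_ge0)
  also have "\<dots> \<le> mxd x w" using mxd_suffix[of x "a @ s1 # bw @ [s2]" c] w2 pe by simp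
  finally have dp'le: "dp p' \<le> d" by (simp add: d_def)
  obtain b1 where b1: "s1 = (T, b1)" using s1 by (cases s1) auto
  obtain b2 where b2: "s2 = (T, b2)" using s2 by (cases s2) auto
  define e1 where "e1 = tedge p b1"
  define e2 where "e2 = tedge y' b2"
  have e1E: "e1 \<in> EE" and e2E: "e2 \<in> EE" using tedge_E pC y'C by (auto simp: e1_def e2_def)
  have se1: "bs_src \<alpha> e1 = V p" and te1: "bs_tgt \<alpha> e1 = V y"
    using tedge_src[OF pC] tedge_tgt[OF pC] by (auto simp: e1_def y_def b1)
  have se2: "bs_src \<alpha> e2 = V y'" and te2: "bs_tgt \<alpha> e2 = V p'"
    using tedge_src[OF y'C] tedge_tgt[OF y'C] by (auto simp: e2_def p'_def b2)
  have yN: "V y \<in> NN" using V_in[OF yC] D_V0 ly dpos by (auto simp: dp_def y_def p_def)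
  have oE: "bs_opp \<alpha> e2 \<in> EE" using opp_E[OF e2E] .
  have so: "bs_src \<alpha> (bs_opp \<alpha> e2) = V p'" using te2 by (simp add: bs_tgt_def)
  have tgo: "bs_tgt \<alpha> (bs_opp \<alpha> e2) = V y" using tgt_opp[OF e2E] se2 Vy' by simp
  have "D (V p') \<noteq> D (V y)" using G1[OF oE] so tgo yN by simp
  then have dp'lt: "dp p' < d" using dp'le ly by (simp add: dp_def y_def p_def)
  have "e1 = bs_opp \<alpha> e2"
    using G3[OF e1E oE] te1 tgo yN se1 so lp dp'lt ly by (simp add: dp_def p_def y_def)
  then have e2o: "e2 = bs_opp \<alpha> e1" using opp_opp[OF e2E] by simp
  have Dl: "D (bs_src \<alpha> e1) < D (bs_tgt \<alpha> e1)" using se1 te1 lp ly by (simp add: dp_def p_def y_def)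
  have bwb: "bs_eq m n bw (bpow (expB bw))" using bword_bpow[OF bwB] .
  have y'b: "y' = bp \<alpha> (expB bw) y" using act_beq[OF bwb yC] act_bpow[OF yC] by (simp add: y'_def)
  obtain K where K: "bs_eq m n ([s1] @ bw @ [s2]) (bpow K)"
  proof (cases b1)
    case True
    have yt: "y = tau \<alpha> p" by (simp add: y_def b1 True)
    have "e2 = (False, orb \<alpha> m y)" using e2o opp_pos[OF pC] yt by (simp add: e1_def tedge_def True)
    then have b2f: "\<not> b2" and om: "orb \<alpha> m y' = orb \<alpha> m y" by (auto simp: e2_def tedge_def split: if_splits)
    then have "y' \<in> orb \<alpha> m y" using orb_self[of y' m] by simp
    then obtain i where "y' = bp \<alpha> (m*i) y" by (auto simp: orb_def)
    then have "bp \<alpha> (expB bw) y = bp \<alpha> (m*i) y" using y'b by simp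
    moreover have "fst e1" by (simp add: e1_def tedge_def True)
    ultimately have "m dvd expB bw" using label_dvd[OF e1E te1 yN yC Dl, of m] by simp
    then obtain i' where i': "expB bw = m * i'" by (auto simp: dvd_def)
    have "[s1] @ bw @ [s2] = [(T,True)] @ bw @ [(T,False)]" using b1 b2 b2f True by simp
    also have "bs_eq m n \<dots> ([(T,True)] @ bpow (m*i') @ [(T,False)])"
      using beq_mid[OF bwb, of "[(T,True)]" "[(T,False)]"] i' by simp
    also have "bs_eq m n \<dots> (bpow (n*i'))" by (rule relpow_T)
    finally show ?thesis by (rule that)
  next
    case False
    have yt: "y = tinv \<alpha> p" by (simp add: y_def b1 False)
    then have pt: "p = tau \<alpha> y" using tau_tinv pC by simp
    have "e1 = (False, orb \<alpha> m (tau \<alpha> y))" using pt by (simp add: e1_def tedge_def False)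
    then have "e2 = (True, orb \<alpha> n y)" using e2o opp_neg[OF yC] by simp
    then have b2t: "b2" and om: "orb \<alpha> n y' = orb \<alpha> n y" by (auto simp: e2_def tedge_def split: if_splits)
    then have "y' \<in> orb \<alpha> n y" using orb_self[of y' n] by simp
    then obtain i where "y' = bp \<alpha> (n*i) y" by (auto simp: orb_def)
    then have "bp \<alpha> (expB bw) y = bp \<alpha> (n*i) y" using y'b by simp
    moreover have "\<not> fst e1" by (simp add: e1_def tedge_def False)
    ultimately have "n dvd expB bw" using label_dvd[OF e1E te1 yN yC Dl, of n] by simp
    then obtain i' where i': "expB bw = n * i'" by (auto simp: dvd_def)
    have "[s1] @ bw @ [s2] = [(T,False)] @ bw @ [(T,True)]" using b1 b2 b2t False by simp
    also have "bs_eq m n \<dots> ([(T,False)] @ bpow (n*i') @ [(T,True)])"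
      using beq_mid[OF bwb, of "[(T,False)]" "[(T,True)]"] i' by simp
    also have "bs_eq m n \<dots> (bpow (m*i'))" by (rule relpow_Tinv)
    finally show ?thesis by (rule that)
  qed
  define w'' where "w'' = a @ bpow K @ c"
  have "w = a @ ([s1] @ bw @ [s2]) @ c" using w r by simp
  then have "bs_eq m n w w''" using beq_mid[OF K, of a c] by (simp add: w''_def)
  moreover have "tc w'' < tc w" using w r s1 s2 tc_bw[OF bwB] by (simp add: w''_def)
  ultimately show ?thesis by blast
qed

lemma reduce: "x \<in> C0 \<Longrightarrow> act \<alpha> x w \<in> C0 \<Longrightarrow> \<exists>w'. sch_path \<alpha>0 x w' (act \<alpha> x w) \<and> bs_eq m n w w'"
proof (induction "tc w" arbitrary: w rule: less_induct)
  case less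
  show ?case
  proof (cases "mxd x w = 0")
    case True
    then show ?thesis using mxd0_path[OF less.prems(1) True] by auto
  next
    case False
    then obtain w'' where w'': "tc w'' < tc w" "bs_eq m n w w''"
      using reduce_step[OF less.prems] by auto
    have xC: "x \<in> C" using less.prems C0_sub by auto
    have eq: "act \<alpha> x w'' = act \<alpha> x w" using act_beq[OF w''(2) xC] by simp
    obtain w' where "sch_path \<alpha>0 x w' (act \<alpha> x w'')" "bs_eq m n w'' w'"
      using less.hyps[OF w''(1)] less.prems eq by metis
    then show ?thesis using eq w''(2) beq_trans by metis
  qed
qed

end


context mfs begin

lemma stab_eq: assumes x0: "x0 \<in> C0" shows "stab m n \<alpha> x0 = stab m n \<alpha>0 x0"
proof
  show "stab m n \<alpha> x0 \<subseteq> stab m n \<alpha>0 x0"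
  proof
    fix X assume "X \<in> stab m n \<alpha> x0"
    then obtain w where X: "X = cls m n w" and p: "sch_path \<alpha> x0 w x0" by (auto simp: stab_def)
    have "act \<alpha> x0 w = x0" using p path_iff by simp
    then obtain w' where w': "sch_path \<alpha>0 x0 w' x0" "bs_eq m n w w'" using reduce[OF x0] x0 by metis
    then have "X = cls m n w'" using X cls_eq_iff by blast
    then show "X \<in> stab m n \<alpha>0 x0" using w' by (auto simp: stab_def)
  qed
  show "stab m n \<alpha>0 x0 \<subseteq> stab m n \<alpha> x0"
    using sub_path by (auto simp: stab_def)
qed

lemma walk_lift: "walk W v es w' \<Longrightarrow> q \<in> C \<Longrightarrow> V q = v \<Longrightarrow> \<exists>u. V (act \<alpha> q u) = w'"
proof (induction arbitrary: q rule: bs_walk.induct)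
  case (nil v) then show ?case by (intro exI[of _ "[]"]) simp
next
  case (cons e v es w')
  obtain x b where xb: "x \<in> C" "e = tedge x b" using edge_point[OF cons.hyps(1)] by blast
  have "V x = V q" using tedge_src[OF xb(1)] xb(2) cons by simp
  then have "x \<in> V q" using orb_self[of x 1] by simp
  then obtain k where k: "x = bp \<alpha> k q" by (auto simp: orb_def)
  have "act \<alpha> q (bpow k @ [(T, b)]) = step \<alpha> x (T, b)" using act_bpow[OF cons.prems(1)] k by (simp add: act_app)
  moreover have "V (step \<alpha> x (T, b)) = bs_tgt \<alpha> e" using tedge_tgt[OF xb(1)] xb(2) by simp
  ultimately obtain u where "V (act \<alpha> (act \<alpha> q (bpow k @ [(T, b)])) u) = w'"
    using cons.IH[of "act \<alpha> q (bpow k @ [(T, b)])"] step_in[OF xb(1)] by auto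
  then show ?case by (metis act_app)
qed

lemma reach: assumes x0: "x0 \<in> C0" and tr: "transitive \<alpha>0" and z: "z \<in> C"
  shows "\<exists>u. act \<alpha> x0 u = z"
proof -
  obtain es w where "walk VV (V z) es w" "w \<in> V0" using conn V_in[OF z] by blast
  then obtain u where u: "V (act \<alpha> z u) \<in> V0" using walk_lift z by metis
  then have q: "act \<alpha> z u \<in> C0" using V_old act_in z by blast
  then obtain u2 where "sch_path \<alpha>0 (act \<alpha> z u) u2 x0" using tr x0 by (auto simp: transitive_def)
  then have "act \<alpha> (act \<alpha> z u) u2 = x0" using sub_path path_iff by metis
  then have "act \<alpha> z (u @ u2) = x0" by (simp add: act_app)
  then have "act \<alpha> x0 (winv (u @ u2)) = z" using act_winv z by metis
  then show ?thesis by blast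
qed

lemma memH: assumes x0: "x0 \<in> C" shows "cls m n u \<in> stab m n \<alpha> x0 \<longleftrightarrow> act \<alpha> x0 u = x0"
proof
  assume "cls m n u \<in> stab m n \<alpha> x0"
  then obtain l where l: "cls m n u = cls m n l" "sch_path \<alpha> x0 l x0" by (auto simp: stab_def)
  then have "bs_eq m n u l" using cls_eq_iff by blast
  then have "act \<alpha> x0 u = act \<alpha> x0 l" using act_beq x0 by blast
  also have "act \<alpha> x0 l = x0" using l(2) path_iff by simp
  finally show "act \<alpha> x0 u = x0" .
next
  assume "act \<alpha> x0 u = x0"
  then have "sch_path \<alpha> x0 u x0" using path_iff x0 by simp
  then show "cls m n u \<in> stab m n \<alpha> x0" by (auto simp: stab_def)
qed

lemma coset_mem: "X \<in> coset m n H w \<longleftrightarrow> (\<exists>u. X = cls m n (u @ w) \<and> cls m n u \<in> H)"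
  by (auto simp: coset_def)

lemma coset_eq: assumes x0: "x0 \<in> C"
  shows "coset m n (stab m n \<alpha> x0) w1 = coset m n (stab m n \<alpha> x0) w2 \<longleftrightarrow> act \<alpha> x0 w1 = act \<alpha> x0 w2"
proof
  let ?H = "stab m n \<alpha> x0"
  assume eq: "coset m n ?H w1 = coset m n ?H w2"
  have "cls m n [] \<in> ?H" using memH[OF x0, of "[]"] by simp
  then have "cls m n ([] @ w1) \<in> coset m n ?H w1" unfolding coset_def by blast
  then have "cls m n w1 \<in> coset m n ?H w2" using eq by simp
  then obtain u where u: "cls m n w1 = cls m n (u @ w2)" "cls m n u \<in> ?H" unfolding coset_def by blast
  then have "bs_eq m n w1 (u @ w2)" using cls_eq_iff by blast
  then have "act \<alpha> x0 w1 = act \<alpha> x0 (u @ w2)" using act_beq x0 by blast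
  also have "\<dots> = act \<alpha> x0 w2" using memH[OF x0] u(2) by (simp add: act_app)
  finally show "act \<alpha> x0 w1 = act \<alpha> x0 w2" .
next
  let ?H = "stab m n \<alpha> x0"
  have sub: "coset m n ?H w1 \<subseteq> coset m n ?H w2" if h: "act \<alpha> x0 w1 = act \<alpha> x0 w2" for w1 w2
  proof
    fix X assume "X \<in> coset m n ?H w1"
    then obtain u where u: "X = cls m n (u @ w1)" "cls m n u \<in> ?H" unfolding coset_def by blast
    define u' where "u' = u @ w1 @ winv w2"
    have au: "act \<alpha> x0 u = x0" using memH[OF x0] u(2) by simp
    have "act \<alpha> x0 u' = act \<alpha> (act \<alpha> x0 w2) (winv w2)" using au h by (simp add: u'_def act_app)
    also have "\<dots> = x0" using act_winv x0 by simp
    finally have "cls m n u' \<in> ?H" using memH[OF x0] by simp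
    moreover have "bs_eq m n (u' @ w2) (u @ w1)"
      using beq_mid[OF inv_left[of m n w2], of "u @ w1" "[]"] by (simp add: u'_def)
    then have "cls m n (u' @ w2) = X" using u(1) cls_eq_iff by blast
    ultimately show "X \<in> coset m n ?H w2" unfolding coset_def by blast
  qed
  assume h: "act \<alpha> x0 w1 = act \<alpha> x0 w2"
  show "coset m n ?H w1 = coset m n ?H w2" by (rule subset_antisym[OF sub[OF h] sub[OF h[symmetric]]])
qed

lemma coset_act_eq: "coset_act m n (coset m n H w) s = coset m n H (w @ [s])"
proof
  show "coset_act m n (coset m n H w) s \<subseteq> coset m n H (w @ [s])"
  proof
    fix X assume "X \<in> coset_act m n (coset m n H w) s"
    then obtain u' where u': "X = cls m n (u' @ [s])" "cls m n u' \<in> coset m n H w" by (auto simp: coset_act_def)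
    then obtain u where u: "cls m n u' = cls m n (u @ w)" "cls m n u \<in> H" unfolding coset_def by blast
    then have "bs_eq m n u' (u @ w)" using cls_eq_iff by blast
    then have "bs_eq m n (u' @ [s]) ((u @ w) @ [s])" by (rule beq_appR)
    then have "X = cls m n (u @ (w @ [s]))" using u'(1) cls_eq_iff by simp
    then show "X \<in> coset m n H (w @ [s])" using u(2) coset_mem by blast
  qed
  show "coset m n H (w @ [s]) \<subseteq> coset_act m n (coset m n H w) s"
  proof
    fix X assume "X \<in> coset m n H (w @ [s])"
    then obtain u where u: "X = cls m n (u @ (w @ [s]))" "cls m n u \<in> H" unfolding coset_def by blast
    have "cls m n (u @ w) \<in> coset m n H w" using u(2) coset_mem by blast
    moreover have "X = cls m n ((u @ w) @ [s])" using u(1) by simp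
    ultimately show "X \<in> coset_act m n (coset m n H w) s" unfolding coset_act_def by blast
  qed
qed

lemma final:
  assumes x0: "x0 \<in> C0" and tr: "transitive \<alpha>0"
  shows "stab m n \<alpha> x0 = stab m n \<alpha>0 x0
    \<and> (\<exists>\<phi>. bij_betw \<phi> (carrier \<alpha>) (coset_space m n (stab m n \<alpha>0 x0))
         \<and> \<phi> x0 = coset m n (stab m n \<alpha>0 x0) []
         \<and> (\<forall>x \<in> carrier \<alpha>. \<phi> (bmap \<alpha> x) = coset_act m n (\<phi> x) (B, True)
                        \<and> \<phi> (the (tmap \<alpha> x)) = coset_act m n (\<phi> x) (T, True)))"
proof -
  have x0C: "x0 \<in> C" using x0 C0_sub by auto
  define H where "H = stab m n \<alpha> x0"
  have HH: "H = stab m n \<alpha>0 x0" using stab_eq[OF x0] by (simp add: H_def)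
  define wd where "wd z = (SOME u. act \<alpha> x0 u = z)" for z
  have wd: "act \<alpha> x0 (wd z) = z" if "z \<in> C" for z
    unfolding wd_def using reach[OF x0 tr that] by (rule someI_ex)
  define \<phi> where "\<phi> z = coset m n H (wd z)" for z
  have phi_act: "\<phi> (act \<alpha> x0 u) = coset m n H u" for u
  proof -
    have "act \<alpha> x0 (wd (act \<alpha> x0 u)) = act \<alpha> x0 u" using wd[OF act_in[OF x0C]] .
    then show ?thesis using coset_eq[OF x0C] by (simp add: \<phi>_def H_def)
  qed
  have "\<phi> x0 = coset m n H []" using phi_act[of "[]"] by simp
  moreover have "\<forall>x \<in> C. \<phi> (bmap \<alpha> x) = coset_act m n (\<phi> x) (B, True)
                        \<and> \<phi> (the (tmap \<alpha> x)) = coset_act m n (\<phi> x) (T, True)"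
  proof
    fix x assume x: "x \<in> C"
    obtain u where u: "x = act \<alpha> x0 u" using reach[OF x0 tr x] by metis
    have "bmap \<alpha> x = act \<alpha> x0 (u @ [(B,True)])" using u by (simp add: act_app)
    moreover have "the (tmap \<alpha> x) = act \<alpha> x0 (u @ [(T,True)])" using u by (simp add: act_app tau_def)
    ultimately show "\<phi> (bmap \<alpha> x) = coset_act m n (\<phi> x) (B, True)
                        \<and> \<phi> (the (tmap \<alpha> x)) = coset_act m n (\<phi> x) (T, True)"
      using phi_act u coset_act_eq by simp
  qed
  moreover have "bij_betw \<phi> C (coset_space m n H)"
  proof (rule bij_betw_imageI)
    show "inj_on \<phi> C"
    proof
      fix z1 z2 assume z: "z1 \<in> C" "z2 \<in> C" and e: "\<phi> z1 = \<phi> z2"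
      then have "act \<alpha> x0 (wd z1) = act \<alpha> x0 (wd z2)" using coset_eq[OF x0C] by (simp add: \<phi>_def H_def)
      then show "z1 = z2" using wd z by simp
    qed
    show "\<phi> ` C = coset_space m n H"
    proof
      show "\<phi> ` C \<subseteq> coset_space m n H" by (auto simp: \<phi>_def coset_space_def)
      show "coset_space m n H \<subseteq> \<phi> ` C"
      proof
        fix X assume "X \<in> coset_space m n H"
        then obtain w where "X = coset m n H w" by (auto simp: coset_space_def)
        then have "X = \<phi> (act \<alpha> x0 w)" using phi_act by simp
        then show "X \<in> \<phi> ` C" using act_in[OF x0C] by blast
      qed
    qed
  qed
  ultimately show ?thesis using HH H_def by blast
qed

end

theorem mainTheorem12:
  fixes m n :: int and \<alpha>0 \<alpha> :: "'a preact" and x0 :: 'a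
  assumes "\<bar>m\<bar> \<ge> 2" and "\<bar>n\<bar> \<ge> 2"
    and "pre_action m n \<alpha>0" and "transitive \<alpha>0" and "x0 \<in> carrier \<alpha>0"
    and "max_forest_saturation m n \<alpha>0 \<alpha>"
  shows "stab m n \<alpha> x0 = stab m n \<alpha>0 x0
    \<and> (\<exists>\<phi>. bij_betw \<phi> (carrier \<alpha>) (coset_space m n (stab m n \<alpha>0 x0))
         \<and> \<phi> x0 = coset m n (stab m n \<alpha>0 x0) []
         \<and> (\<forall>x \<in> carrier \<alpha>. \<phi> (bmap \<alpha> x) = coset_act m n (\<phi> x) (B, True)
                        \<and> \<phi> (the (tmap \<alpha> x)) = coset_act m n (\<phi> x) (T, True)))"
proof -
  have all: "pre_action m n \<alpha> \<and> saturated \<alpha> \<and> extends \<alpha> \<alpha>0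
    \<and> ({e \<in> bs_E m n \<alpha>. bs_src \<alpha> e \<in> bs_V \<alpha>0 \<and> bs_tgt \<alpha> e \<in> bs_V \<alpha>0} = bs_E m n \<alpha>0
    \<and> is_forest m n \<alpha> (bs_V \<alpha> - bs_V \<alpha>0)
    \<and> (\<forall>v \<in> bs_V \<alpha> - bs_V \<alpha>0. \<exists>!e. e \<in> bs_E m n \<alpha> \<and> bs_src \<alpha> e \<in> bs_V \<alpha>0
                 \<and> bs_tgt \<alpha> e \<in> component m n \<alpha> (bs_V \<alpha> - bs_V \<alpha>0) v)
    \<and> (\<forall>e \<in> bs_E m n \<alpha>. bs_tgt \<alpha> e \<in> bs_V \<alpha> - bs_V \<alpha>0
            \<and> dist_to m n \<alpha> (bs_V \<alpha>0) (bs_src \<alpha> e) < dist_to m n \<alpha> (bs_V \<alpha>0) (bs_tgt \<alpha> e)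
            \<longrightarrow> lab (bs_tgt \<alpha> e) = child_lab m n (fst e) (lab (bs_src \<alpha> e))))"
    using assms(6) unfolding max_forest_saturation_def Let_def .
  note M = all[THEN conjunct1] all[THEN conjunct2, THEN conjunct1] all[THEN conjunct2, THEN conjunct2, THEN conjunct1]
  note R0 = all[THEN conjunct2, THEN conjunct2, THEN conjunct2]
  note R = R0[THEN conjunct1] R0[THEN conjunct2, THEN conjunct1] R0[THEN conjunct2, THEN conjunct2, THEN conjunct1]
    R0[THEN conjunct2, THEN conjunct2, THEN conjunct2]
  interpret mfs \<alpha> m n \<alpha>0
    apply unfold_locales
    using M(1) apply (simp add: pre_action_def)
    apply (rule M R assms(3))+
    done
  show ?thesis by (rule final[OF assms(5) assms(4)])
qed


end
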